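(* Let $f\in L^2(\pi)$ with $\mathbb{E}_\pi[f]=0$ and $\|f\|_\pi>0$. Then $\lambda\mapsto\mathcal{E}_\lambda(f)=\langle f,(I-P_\lambda)f\rangle_\pi$, $\lambda\ge1$, is a non-negative, continuous, concave and strictly increasing function.
   Context: Let $\pi,q$ be probability densities with respect to a $\sigma$-finite measure $\mu$ on $(\mathbb{X},\mathcal{X})$ with $q>0$ wherever $\pi>0$; $\pi(dx)=\pi(x)\mu(dx)$, $q(dx)=q(x)\mu(dx)$, $\mathbb{S}=\{\pi>0\}$, $w=\pi/q$ on $\mathbb{S}$ and $0$ elsewhere. For integer $N\ge1$ and $z_1\in\mathbb{S}$, $P_N(z_1,A)=\int_{\mathbb{X}^{N-1}}\sum_{i=1}^N\frac{w(z_i)}{\sum_{j=1}^Nw(z_j)}\mathbf 1\{z_i\in A\}\prod_{n=2}^Nq(dz_n)$, $P_1(z,\cdot)=\delta_z$; for real $\lambda\ge1$, $P_\lambda=\beta P_{\lfloor\lambda\rfloor}+(1-\beta)P_{\lfloor\lambda\rfloor+1}$ with $\beta=\lfloor\lambda\rfloor+1-\lambda$. $\langle g,h\rangle_\pi=\int gh\,d\pi$, $\|g\|_\pi^2=\langle g,g\rangle_\pi$, $P_\lambda f(x)=\int f(y)P_\lambda(x,dy)$. *)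

theory Defs
  imports "HOL-Analysis.Analysis"
begin

definition iw :: "('a \<Rightarrow> real) \<Rightarrow> ('a \<Rightarrow> real) \<Rightarrow> 'a \<Rightarrow> real" where
  "iw p q x = (if p x > 0 then p x / q x else 0)"

text \<open>The multiple-proposal kernel P_N applied to f at the current state z1:
  z_2..z_N are i.i.d. from q(dx) = q(x) mu(dx) (product measure over the index set {2..N}),
  and z_1 is the current state.\<close>
definition PN :: "'a measure \<Rightarrow> ('a \<Rightarrow> real) \<Rightarrow> ('a \<Rightarrow> real) \<Rightarrow> nat \<Rightarrow> ('a \<Rightarrow> real) \<Rightarrow> 'a \<Rightarrow> real" where
  "PN M p q N f z1 =
     (if N \<le> 1 then f z1 else
      (\<integral>z. (let zz = z(1 := z1) in
              (\<Sum>i\<in>{1..N}. iw p q (zz i) / (\<Sum>j\<in>{1..N}. iw p q (zz j)) * f (zz i)))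
        \<partial>(PiM {2..N} (\<lambda>_. density M q))))"

definition Plam :: "'a measure \<Rightarrow> ('a \<Rightarrow> real) \<Rightarrow> ('a \<Rightarrow> real) \<Rightarrow> real \<Rightarrow> ('a \<Rightarrow> real) \<Rightarrow> 'a \<Rightarrow> real" where
  "Plam M p q lam f x =
     (let n = nat \<lfloor>lam\<rfloor>; \<beta> = real n + 1 - lam in
        \<beta> * PN M p q n f x + (1 - \<beta>) * PN M p q (n + 1) f x)"

definition Dir :: "'a measure \<Rightarrow> ('a \<Rightarrow> real) \<Rightarrow> ('a \<Rightarrow> real) \<Rightarrow> real \<Rightarrow> ('a \<Rightarrow> real) \<Rightarrow> real" where
  "Dir M p q lam f = (\<integral>x. f x * (f x - Plam M p q lam f x) \<partial>(density M p))"

end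

theory Submission
  imports Defs "HOL-Probability.Probability"
begin

definition Vs :: "(nat \<Rightarrow> real) \<Rightarrow> (nat \<Rightarrow> real) \<Rightarrow> nat set \<Rightarrow> real" where
  "Vs a b S = (\<Sum>i\<in>S. a i * (b i)^2) - (\<Sum>i\<in>S. a i * b i)^2 / (\<Sum>i\<in>S. a i)"

lemma zero_weights:
  assumes "finite S" "\<forall>i\<in>S. a i \<ge> 0" "(\<Sum>i\<in>S. a i) = (0::real)" "i \<in> S"
  shows "a i = 0"
  using assms by (simp add: sum_nonneg_eq_0_iff)

lemma Vs_shift:
  assumes "finite S" "\<forall>i\<in>S. a i \<ge> 0"
  shows "Vs a (\<lambda>i. b i - t) S = Vs a b S"
proof (cases "(\<Sum>i\<in>S. a i) = 0")
  case True
  then have "\<forall>i\<in>S. a i = 0" using zero_weights[OF assms(1) assms(2) True] by blast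
  then show ?thesis by (simp add: Vs_def)
next
  case False
  define W where "W = (\<Sum>i\<in>S. a i)"
  define M where "M = (\<Sum>i\<in>S. a i * b i)"
  define L where "L = (\<Sum>i\<in>S. a i * (b i)^2)"
  have 1: "(\<Sum>i\<in>S. a i * (b i - t)^2) = L - 2*t*M + t^2 * W"
  proof -
    have "(\<Sum>i\<in>S. a i * (b i - t)^2) = (\<Sum>i\<in>S. a i * (b i)^2 - (2*t) * (a i * b i) + t^2 * a i)"
      by (rule sum.cong) (auto simp: power2_eq_square algebra_simps)
    also have "\<dots> = L - 2*t*M + t^2 * W"
      unfolding L_def M_def W_def by (simp add: sum.distrib sum_subtractf sum_distrib_left)
    finally show ?thesis .
  qed
  have 2: "(\<Sum>i\<in>S. a i * (b i - t)) = M - t * W"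
    unfolding M_def W_def by (simp add: algebra_simps sum_subtractf sum_distrib_left)
  have W0: "W \<noteq> 0" using False W_def by simp
  have "L - 2*t*M + t^2 * W - (M - t*W)^2 / W = L - M^2/W"
    using W0 by (simp add: field_simps power2_eq_square)
  then show ?thesis unfolding Vs_def 1 2 by (simp add: W_def M_def L_def)
qed

lemma Vs_nonneg:
  assumes "finite S" "\<forall>i\<in>S. a i \<ge> 0"
  shows "Vs a b S \<ge> 0"
proof (cases "(\<Sum>i\<in>S. a i) = 0")
  case True
  then have "\<forall>i\<in>S. a i = 0" using zero_weights[OF assms(1) assms(2) True] by blast
  then show ?thesis by (simp add: Vs_def)
next
  case False
  define c where "c = (\<Sum>i\<in>S. a i * b i) / (\<Sum>i\<in>S. a i)"
  have "(\<Sum>i\<in>S. a i * (b i - c)) = (\<Sum>i\<in>S. a i * b i) - c * (\<Sum>i\<in>S. a i)"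
    by (simp add: algebra_simps sum_subtractf sum_distrib_left)
  also have "\<dots> = 0" using False by (simp add: c_def)
  finally have "Vs a (\<lambda>i. b i - c) S = (\<Sum>i\<in>S. a i * (b i - c)^2)" by (simp add: Vs_def)
  also have "\<dots> \<ge> 0" using assms by (intro sum_nonneg) auto
  finally show ?thesis using Vs_shift[OF assms] by simp
qed

lemma CS_weighted:
  fixes a b :: "nat \<Rightarrow> real"
  assumes "finite S" "\<forall>i\<in>S. a i \<ge> 0"
  shows "(\<Sum>i\<in>S. a i * b i)^2 \<le> (\<Sum>i\<in>S. a i) * (\<Sum>i\<in>S. a i * (b i)^2)"
proof (cases "(\<Sum>i\<in>S. a i) = 0")
  case True
  then have "\<forall>i\<in>S. a i = 0" using zero_weights[OF assms(1) assms(2) True] by blast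
  then show ?thesis by simp
next
  case False
  have W: "(\<Sum>i\<in>S. a i) > 0" using False assms by (metis order_le_less sum_nonneg)
  have "(\<Sum>i\<in>S. a i * b i)^2 / (\<Sum>i\<in>S. a i) \<le> (\<Sum>i\<in>S. a i * (b i)^2)"
    using Vs_nonneg[OF assms, of b] by (simp add: Vs_def)
  then show ?thesis using W by (simp add: field_simps)
qed

lemma alg_e1: fixes W d xj s Q0 Q1 aj C :: real
  assumes "C = W * (xj + s)^2 + W * (xj^2 + Q0) - 2 * (aj * xj^2 + Q1)"
  shows "d^2 * C = W * (d * xj + d * s)^2 + W * (d * xj)^2 + d^2 * W * Q0 - 2 * aj * (d * xj)^2 - 2 * d^2 * Q1"
  unfolding assms by algebra

lemma alg_e2: fixes W d xj s Q0 Q1 aj C T :: real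
  assumes "d^2 * C = W * (d * xj + d * s)^2 + W * (d * xj)^2 + d^2 * W * Q0 - 2 * aj * (d * xj)^2 - 2 * d^2 * Q1"
   "d * xj = T - W * s" "W = aj + d"
  shows "d^2 * C = W * (d * s - T)^2 + T^2 * (2 * d - W) + d^2 * W * Q0 - 2 * d^2 * Q1"
  using assms by algebra

lemma C_nonneg:
  fixes a x :: "nat \<Rightarrow> real"
  assumes fin: "finite S" and nn: "\<forall>i\<in>S. a i \<ge> 0" and Wd: "W = (\<Sum>i\<in>S. a i)"
    and con: "W * (\<Sum>i\<in>S. x i) = (\<Sum>i\<in>S. a i * x i)"
  shows "W * (\<Sum>i\<in>S. x i)^2 + W * (\<Sum>i\<in>S. (x i)^2) - 2 * (\<Sum>i\<in>S. a i * (x i)^2) \<ge> 0"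
proof (cases "\<forall>k\<in>S. 2 * a k \<le> W")
  case True
  have "(\<Sum>i\<in>S. (x i)^2 * (W - 2 * a i)) = (\<Sum>i\<in>S. W * (x i)^2 - 2 * (a i * (x i)^2))"
    by (rule sum.cong) (auto simp: algebra_simps)
  also have "\<dots> = W * (\<Sum>i\<in>S. (x i)^2) - 2 * (\<Sum>i\<in>S. a i * (x i)^2)"
    by (simp add: sum_subtractf sum_distrib_left)
  finally have "W * (\<Sum>i\<in>S. (x i)^2) - 2 * (\<Sum>i\<in>S. a i * (x i)^2) = (\<Sum>i\<in>S. (x i)^2 * (W - 2 * a i))" by simp
  also have "\<dots> \<ge> 0" using True by (intro sum_nonneg) auto
  finally have 1: "W * (\<Sum>i\<in>S. (x i)^2) - 2 * (\<Sum>i\<in>S. a i * (x i)^2) \<ge> 0" .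
  have "W \<ge> 0" using Wd nn by (simp add: sum_nonneg)
  then have "W * (\<Sum>i\<in>S. x i)^2 \<ge> 0" by simp
  with 1 show ?thesis by linarith
next
  case False
  then obtain j where j: "j \<in> S" "2 * a j > W" by force
  define R where "R = S - {j}"
  have finR: "finite R" using fin R_def by simp
  define d where "d = (\<Sum>i\<in>R. a i)"
  define s where "s = (\<Sum>i\<in>R. x i)"
  define T where "T = (\<Sum>i\<in>R. a i * x i)"
  define Q0 where "Q0 = (\<Sum>i\<in>R. (x i)^2)"
  define Q1 where "Q1 = (\<Sum>i\<in>R. a i * (x i)^2)"
  have sp: "\<And>g :: nat \<Rightarrow> real. (\<Sum>i\<in>S. g i) = g j + (\<Sum>i\<in>R. g i)"
    unfolding R_def using fin j(1) by (simp add: sum.remove)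
  have W: "W = a j + d" using Wd sp d_def by simp
  have d0: "d \<ge> 0" unfolding d_def using nn R_def by (intro sum_nonneg) auto
  have aR: "\<forall>k\<in>R. a k \<le> d" unfolding d_def
    using nn R_def finR by (auto intro!: member_le_sum)
  have dlt: "a j > d" using j W by linarith
  have CS: "T^2 \<le> d * Q1" unfolding T_def d_def Q1_def
    using CS_weighted[OF finR, of a x] nn R_def by auto
  have Q01: "Q1 \<le> d * Q0"
  proof -
    have "(\<Sum>i\<in>R. (x i)^2 * (d - a i)) = (\<Sum>i\<in>R. d * (x i)^2 - a i * (x i)^2)"
      by (rule sum.cong) (auto simp: algebra_simps)
    also have "\<dots> = d * Q0 - Q1" unfolding Q0_def Q1_def
      by (simp add: sum_subtractf sum_distrib_left)
    finally have "d * Q0 - Q1 = (\<Sum>i\<in>R. (x i)^2 * (d - a i))" by simp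
    also have "\<dots> \<ge> 0" using aR by (intro sum_nonneg) auto
    finally show ?thesis by simp
  qed
  have Q1nn: "Q1 \<ge> 0" unfolding Q1_def using nn R_def by (intro sum_nonneg) auto
  have con': "d * x j = T - W * s"
    using con unfolding sp s_def T_def W by (simp add: algebra_simps)
  define C where "C = W * (x j + s)^2 + W * ((x j)^2 + Q0) - 2 * (a j * (x j)^2 + Q1)"
  have Ceq: "W * (\<Sum>i\<in>S. x i)^2 + W * (\<Sum>i\<in>S. (x i)^2) - 2 * (\<Sum>i\<in>S. a i * (x i)^2) = C"
    unfolding C_def sp s_def Q0_def Q1_def by simp
  show ?thesis
  proof (cases "d = 0")
    case True
    then have "T^2 \<le> 0" using CS by simp
    then have "T = 0" by simp
    then have "s = 0" using con' True W dlt by simp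
    have "Q1 = 0" using Q01 Q1nn True by simp
    have "C = W * Q0" unfolding C_def using \<open>s = 0\<close> \<open>Q1 = 0\<close> W True by (simp add: algebra_simps)
    moreover have "Q0 \<ge> 0" unfolding Q0_def by (intro sum_nonneg) auto
    moreover have "W \<ge> 0" using W dlt d0 by simp
    ultimately show ?thesis using Ceq by simp
  next
    case False
    then have dpos: "d > 0" using d0 by simp
    have e2: "d^2 * C = W * (d * s - T)^2 + T^2 * (2 * d - W) + d^2 * W * Q0 - 2 * d^2 * Q1"
      by (rule alg_e2[OF alg_e1[OF C_def] con' W])
    have "T^2 * (2 * d - W) \<ge> d * Q1 * (2 * d - W)"
      using CS W dlt by (intro mult_right_mono_neg) auto
    moreover have "d * Q1 * (2 * d - W) + d^2 * W * Q0 - 2 * d^2 * Q1 = d * W * (d * Q0 - Q1)"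
      by algebra
    ultimately have "d^2 * C \<ge> W * (d * s - T)^2 + d * W * (d * Q0 - Q1)"
      unfolding e2 by linarith
    moreover have "W * (d * s - T)^2 \<ge> 0" using W dlt d0 by simp
    moreover have "d * W * (d * Q0 - Q1) \<ge> 0" using W dlt d0 Q01 by simp
    ultimately have "d^2 * C \<ge> 0" by linarith
    then have "C \<ge> 0" using dpos by (simp add: zero_le_mult_iff)
    then show ?thesis using Ceq by simp
  qed
qed

lemma pair_bound:
  fixes u y D :: real
  assumes "D \<ge> 0" "D = 0 \<Longrightarrow> u = 0"
  shows "2*u*y - y^2*D \<le> u^2/D"
proof (cases "D = 0")
  case True then show ?thesis using assms by simp
next
  case False
  then have D: "D > 0" using assms by simp
  have "u^2/D - (2*u*y - y^2*D) = (u - y*D)^2 / D"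
    using D by (simp add: field_simps power2_eq_square)
  also have "\<dots> \<ge> 0" using D by simp
  finally show ?thesis by simp
qed

lemma sum_remove_el:
  fixes g :: "nat \<Rightarrow> real"
  assumes "finite S" "k \<in> S"
  shows "(\<Sum>i\<in>S-{k}. g i) = (\<Sum>i\<in>S. g i) - g k"
  using assms by (simp add: sum_diff1)

lemma star_ineq:
  fixes a \<beta> :: "nat \<Rightarrow> real"
  assumes fin: "finite S" and nn: "\<forall>i\<in>S. a i \<ge> 0" and Wd: "W = (\<Sum>i\<in>S. a i)"
    and sb: "(\<Sum>i\<in>S. \<beta> i) = 0" and z: "\<forall>i\<in>S. a i = 0 \<longrightarrow> \<beta> i = 0"
  shows "2 * (real (card S) - 2) * (\<Sum>k\<in>S. (\<beta> k)^2 / (W - a k))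
     \<le> (\<Sum>k\<in>S. \<Sum>l\<in>S-{k}. (\<beta> k + \<beta> l)^2 / (W - a k - a l))"
proof -
  define n where "n = real (card S)"
  define x where "x k = \<beta> k / (W - a k)" for k
  have rem1: "W - a k = (\<Sum>i\<in>S-{k}. a i)" if "k \<in> S" for k
    using sum_remove_el[OF fin that, of a] Wd by simp
  have xD: "x k * (W - a k) = \<beta> k" if k: "k \<in> S" for k
  proof (cases "W - a k = 0")
    case True
    have fin1: "finite (S - {k})" using fin by simp
    have nn1: "\<forall>i\<in>S-{k}. a i \<ge> 0" using nn by simp
    have "\<forall>i\<in>S-{k}. a i = 0"
      using zero_weights[OF fin1 nn1] True rem1[OF k] by simp
    then have "\<forall>i\<in>S-{k}. \<beta> i = 0" using z by simp
    then have "(\<Sum>i\<in>S-{k}. \<beta> i) = 0" by simp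
    then have "\<beta> k = 0" using sum_remove_el[OF fin k, of \<beta>] sb by simp
    then show ?thesis using True by simp
  next
    case False
    then show ?thesis unfolding x_def by simp
  qed
  have rem2: "W - a k - a l = (\<Sum>i\<in>S-{k}-{l}. a i)" if "k \<in> S" "l \<in> S-{k}" for k l
  proof -
    have "(\<Sum>i\<in>S-{k}-{l}. a i) = (\<Sum>i\<in>S-{k}. a i) - a l"
      using fin that by (intro sum_remove_el) auto
    then show ?thesis using rem1[OF that(1)] by simp
  qed
  have Dkl: "W - a k - a l \<ge> 0 \<and> (W - a k - a l = 0 \<longrightarrow> \<beta> k + \<beta> l = 0)"
    if kl: "k \<in> S" "l \<in> S-{k}" for k l
  proof
    have fin2: "finite (S-{k}-{l})" using fin by simp
    have nn2: "\<forall>i\<in>S-{k}-{l}. a i \<ge> 0" using nn by simp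
    show "W - a k - a l \<ge> 0" unfolding rem2[OF kl] using nn2 by (intro sum_nonneg) auto
    show "W - a k - a l = 0 \<longrightarrow> \<beta> k + \<beta> l = 0"
    proof
      assume 0: "W - a k - a l = 0"
      have "\<forall>i\<in>S-{k}-{l}. a i = 0"
        using zero_weights[OF fin2 nn2] 0 rem2[OF kl] by simp
      then have "\<forall>i\<in>S-{k}-{l}. \<beta> i = 0" using z by simp
      then have s0: "(\<Sum>i\<in>S-{k}-{l}. \<beta> i) = 0" by simp
      have "(\<Sum>i\<in>S-{k}-{l}. \<beta> i) = (\<Sum>i\<in>S-{k}. \<beta> i) - \<beta> l"
        using fin kl by (intro sum_remove_el) auto
      also have "\<dots> = (\<Sum>i\<in>S. \<beta> i) - \<beta> k - \<beta> l"
        using sum_remove_el[OF fin kl(1), of \<beta>] by simp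
      finally show "\<beta> k + \<beta> l = 0" using s0 sb by simp
    qed
  qed
  define F where "F k l = W * (x k + x l)^2 - ((x k)^2 - (x l)^2) * (a k - a l)" for k l
  have Feq: "2*(\<beta> k + \<beta> l)*(x k + x l) - (x k + x l)^2*(W - a k - a l) = F k l"
    if "k \<in> S" "l \<in> S" for k l
  proof -
    have "\<beta> k = x k * (W - a k)" "\<beta> l = x l * (W - a l)" using xD that by auto
    then show ?thesis unfolding F_def by algebra
  qed
  have step1: "(\<Sum>k\<in>S. \<Sum>l\<in>S-{k}. F k l) \<le> (\<Sum>k\<in>S. \<Sum>l\<in>S-{k}. (\<beta> k + \<beta> l)^2 / (W - a k - a l))"
  proof (intro sum_mono)
    fix k l assume k: "k \<in> S" and l: "l \<in> S - {k}"
    have "F k l = 2*(\<beta> k + \<beta> l)*(x k + x l) - (x k + x l)^2*(W - a k - a l)"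
      using Feq k l by simp
    also have "\<dots> \<le> (\<beta> k + \<beta> l)^2 / (W - a k - a l)"
      using Dkl[OF k l] by (intro pair_bound) auto
    finally show "F k l \<le> (\<beta> k + \<beta> l)^2 / (W - a k - a l)" .
  qed
  define X where "X = (\<Sum>i\<in>S. x i)"
  define Q0 where "Q0 = (\<Sum>i\<in>S. (x i)^2)"
  define Q1 where "Q1 = (\<Sum>i\<in>S. a i * (x i)^2)"
  have inner: "(\<Sum>l\<in>S. F k l) = n * W * (x k)^2 + 2*W*x k * X + W*Q0 - n * a k * (x k)^2 + (x k)^2 * W + a k * Q0 - Q1" for k
  proof -
    have "(\<Sum>l\<in>S. F k l) = (\<Sum>l\<in>S. (W*(x k)^2 - a k*(x k)^2) + (2*W*x k) * x l + W*(x l)^2 + (x k)^2 * a l + a k * (x l)^2 - a l * (x l)^2)"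
      unfolding F_def by (rule sum.cong) (auto simp: power2_eq_square algebra_simps)
    also have "\<dots> = n * (W*(x k)^2 - a k*(x k)^2) + (2*W*x k) * X + W*Q0 + (x k)^2 * W + a k * Q0 - Q1"
      unfolding X_def Q0_def Q1_def n_def Wd
      by (simp add: sum.distrib sum_subtractf sum_distrib_left[symmetric])
    finally show ?thesis by (simp add: algebra_simps)
  qed
  have outer: "(\<Sum>k\<in>S. \<Sum>l\<in>S-{k}. F k l) = (2*n - 2) * W * Q0 + 2 * W * X^2 - 2 * n * Q1"
  proof -
    have "(\<Sum>k\<in>S. \<Sum>l\<in>S-{k}. F k l) = (\<Sum>k\<in>S. (\<Sum>l\<in>S. F k l) - F k k)"
      using fin by (intro sum.cong refl sum_remove_el) auto
    also have "\<dots> = (\<Sum>k\<in>S. (n*W - 3 * W) * (x k)^2 - n * (a k * (x k)^2) + (2*W*X) * x k + (W*Q0 - Q1) + Q0 * a k)"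
    proof (rule sum.cong[OF refl])
      fix k assume "k \<in> S"
      show "(\<Sum>l\<in>S. F k l) - F k k = (n*W - 3 * W) * (x k)^2 - n * (a k * (x k)^2) + (2*W*X) * x k + (W*Q0 - Q1) + Q0 * a k"
        unfolding inner by (simp add: F_def power2_eq_square algebra_simps)
    qed
    also have "\<dots> = (n*W - 3*W) * Q0 - n * Q1 + (2*W*X) * X + n * (W*Q0 - Q1) + Q0 * W"
      unfolding X_def Q0_def Q1_def n_def Wd
      by (simp add: sum.distrib sum_subtractf sum_distrib_left[symmetric] sum_distrib_right[symmetric])
    finally show ?thesis by (simp add: algebra_simps power2_eq_square)
  qed
  have lhs: "(\<Sum>k\<in>S. (\<beta> k)^2 / (W - a k)) = W * Q0 - Q1"
  proof -
    have "(\<Sum>k\<in>S. (\<beta> k)^2 / (W - a k)) = (\<Sum>k\<in>S. W * (x k)^2 - a k * (x k)^2)"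
    proof (rule sum.cong[OF refl])
      fix k assume k: "k \<in> S"
      show "(\<beta> k)^2 / (W - a k) = W * (x k)^2 - a k * (x k)^2"
      proof (cases "W - a k = 0")
        case True
        then have "\<beta> k = 0" using xD[OF k] by simp
        then show ?thesis using True by (simp add: algebra_simps)
      next
        case False
        have "(\<beta> k)^2 / (W - a k) = (x k * (W - a k))^2 / (W - a k)" using xD[OF k] by simp
        also have "\<dots> = (x k)^2 * (W - a k)" using False by (simp add: power2_eq_square)
        also have "\<dots> = W * (x k)^2 - a k * (x k)^2" by (simp add: algebra_simps)
        finally show ?thesis .
      qed
    qed
    also have "\<dots> = W * Q0 - Q1" unfolding Q0_def Q1_def by (simp add: sum_subtractf sum_distrib_left)
    finally show ?thesis .
  qed
  have con: "W * X = (\<Sum>i\<in>S. a i * x i)"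
  proof -
    have "0 = (\<Sum>i\<in>S. x i * (W - a i))" using sb xD by simp
    also have "\<dots> = (\<Sum>i\<in>S. W * x i - a i * x i)" by (rule sum.cong) (auto simp: algebra_simps)
    also have "\<dots> = W * X - (\<Sum>i\<in>S. a i * x i)" unfolding X_def by (simp add: sum_subtractf sum_distrib_left)
    finally show ?thesis by simp
  qed
  have Cn: "W * X^2 + W * Q0 - 2 * Q1 \<ge> 0"
    using C_nonneg[OF fin nn Wd] con unfolding X_def Q0_def Q1_def by simp
  have "2 * (n - 2) * (W * Q0 - Q1) \<le> (2*n - 2) * W * Q0 + 2 * W * X^2 - 2 * n * Q1"
  proof -
    have "(2*n - 2) * W * Q0 + 2 * W * X^2 - 2 * n * Q1 = 2 * (n - 2) * (W * Q0 - Q1) + 2 * (W * X^2 + W * Q0 - 2 * Q1)"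
      by (simp add: algebra_simps)
    then show ?thesis using Cn by (simp only:) simp
  qed
  then have "2 * (n - 2) * (\<Sum>k\<in>S. (\<beta> k)^2 / (W - a k)) \<le> (\<Sum>k\<in>S. \<Sum>l\<in>S-{k}. (\<beta> k + \<beta> l)^2 / (W - a k - a l))"
    unfolding lhs using step1 outer by linarith
  then show ?thesis unfolding n_def .
qed

lemma sum_sum_remove1:
  fixes g :: "nat \<Rightarrow> real"
  assumes "finite S"
  shows "(\<Sum>k\<in>S. \<Sum>i\<in>S-{k}. g i) = (real (card S) - 1) * (\<Sum>i\<in>S. g i)"
proof -
  have "(\<Sum>k\<in>S. \<Sum>i\<in>S-{k}. g i) = (\<Sum>k\<in>S. (\<Sum>i\<in>S. g i) - g k)"
    using assms by (intro sum.cong refl sum_remove_el) auto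
  also have "\<dots> = real (card S) * (\<Sum>i\<in>S. g i) - (\<Sum>i\<in>S. g i)"
    by (simp add: sum_subtractf)
  finally show ?thesis by (simp add: algebra_simps)
qed

lemma sum_sum_remove2:
  fixes g :: "nat \<Rightarrow> real"
  assumes "finite S"
  shows "(\<Sum>k\<in>S. \<Sum>l\<in>S-{k}. \<Sum>i\<in>S-{k}-{l}. g i) = (real (card S) - 1) * (real (card S) - 2) * (\<Sum>i\<in>S. g i)"
proof -
  have "(\<Sum>k\<in>S. \<Sum>l\<in>S-{k}. \<Sum>i\<in>S-{k}-{l}. g i) = (\<Sum>k\<in>S. (real (card S) - 2) * ((\<Sum>i\<in>S. g i) - g k))"
  proof (rule sum.cong[OF refl])
    fix k assume k: "k \<in> S"
    have f1: "finite (S - {k})" using assms by simp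
    have c1: "card (S - {k}) = card S - 1" using k assms by simp
    have cS: "card S \<ge> 1" using k assms card_0_eq by fastforce
    have "(\<Sum>l\<in>S-{k}. \<Sum>i\<in>S-{k}-{l}. g i) = (real (card (S-{k})) - 1) * (\<Sum>i\<in>S-{k}. g i)"
      by (rule sum_sum_remove1[OF f1])
    also have "real (card (S-{k})) - 1 = real (card S) - 2" using c1 cS by (simp add: of_nat_diff)
    also have "(\<Sum>i\<in>S-{k}. g i) = (\<Sum>i\<in>S. g i) - g k" by (rule sum_remove_el[OF assms k])
    finally show "(\<Sum>l\<in>S-{k}. \<Sum>i\<in>S-{k}-{l}. g i) = (real (card S) - 2) * ((\<Sum>i\<in>S. g i) - g k)" .
  qed
  also have "\<dots> = (real (card S) - 2) * (real (card S) * (\<Sum>i\<in>S. g i) - (\<Sum>i\<in>S. g i))"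
    by (simp add: sum_distrib_left[symmetric] sum_subtractf)
  finally show ?thesis by (simp add: algebra_simps)
qed

lemma Vs_centered_facts:
  fixes a b :: "nat \<Rightarrow> real"
  assumes fin: "finite S" and nn: "\<forall>i\<in>S. a i \<ge> 0" and cen: "(\<Sum>i\<in>S. a i * b i) = 0"
  shows "Vs a b S = (\<Sum>i\<in>S. a i * (b i)^2)"
    and "k \<in> S \<Longrightarrow> Vs a b (S-{k}) = (\<Sum>i\<in>S-{k}. a i * (b i)^2) - (a k * b k)^2 / ((\<Sum>i\<in>S. a i) - a k)"
    and "k \<in> S \<Longrightarrow> l \<in> S-{k} \<Longrightarrow> Vs a b (S-{k}-{l}) = (\<Sum>i\<in>S-{k}-{l}. a i * (b i)^2)
           - (a k * b k + a l * b l)^2 / ((\<Sum>i\<in>S. a i) - a k - a l)"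
proof -
  show "Vs a b S = (\<Sum>i\<in>S. a i * (b i)^2)" unfolding Vs_def cen by simp
next
  assume k: "k \<in> S"
  have "(\<Sum>i\<in>S-{k}. a i * b i) = - (a k * b k)" using sum_remove_el[OF fin k, of "\<lambda>i. a i * b i"] cen by simp
  moreover have "(\<Sum>i\<in>S-{k}. a i) = (\<Sum>i\<in>S. a i) - a k" by (rule sum_remove_el[OF fin k])
  ultimately show "Vs a b (S-{k}) = (\<Sum>i\<in>S-{k}. a i * (b i)^2) - (a k * b k)^2 / ((\<Sum>i\<in>S. a i) - a k)"
    unfolding Vs_def by simp
next
  assume k: "k \<in> S" and l: "l \<in> S-{k}"
  have f1: "finite (S-{k})" using fin by simp
  have "(\<Sum>i\<in>S-{k}-{l}. a i * b i) = (\<Sum>i\<in>S-{k}. a i * b i) - a l * b l"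
    by (rule sum_remove_el[OF f1 l])
  also have "(\<Sum>i\<in>S-{k}. a i * b i) = - (a k * b k)" using sum_remove_el[OF fin k, of "\<lambda>i. a i * b i"] cen by simp
  finally have 1: "(\<Sum>i\<in>S-{k}-{l}. a i * b i) = - (a k * b k + a l * b l)" by simp
  have "(\<Sum>i\<in>S-{k}-{l}. a i) = (\<Sum>i\<in>S-{k}. a i) - a l" by (rule sum_remove_el[OF f1 l])
  also have "(\<Sum>i\<in>S-{k}. a i) = (\<Sum>i\<in>S. a i) - a k" by (rule sum_remove_el[OF fin k])
  finally have 2: "(\<Sum>i\<in>S-{k}-{l}. a i) = (\<Sum>i\<in>S. a i) - a k - a l" by simp
  show "Vs a b (S-{k}-{l}) = (\<Sum>i\<in>S-{k}-{l}. a i * (b i)^2) - (a k * b k + a l * b l)^2 / ((\<Sum>i\<in>S. a i) - a k - a l)"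
    unfolding Vs_def 1 2 power2_minus by (rule refl)
qed

lemma Vs_shift_sub:
  assumes "finite S" "\<forall>i\<in>S. a i \<ge> 0" "T \<subseteq> S"
  shows "Vs a (\<lambda>i. b i - t) T = Vs a b T"
  using assms by (intro Vs_shift) (auto intro: finite_subset)

lemma centering:
  fixes a b :: "nat \<Rightarrow> real"
  assumes fin: "finite S" and nn: "\<forall>i\<in>S. a i \<ge> 0" and W: "(\<Sum>i\<in>S. a i) \<noteq> 0"
  defines "c \<equiv> (\<Sum>i\<in>S. a i * b i) / (\<Sum>i\<in>S. a i)"
  shows "(\<Sum>i\<in>S. a i * (b i - c)) = 0"
proof -
  have "(\<Sum>i\<in>S. a i * (b i - c)) = (\<Sum>i\<in>S. a i * b i) - c * (\<Sum>i\<in>S. a i)"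
    by (simp add: algebra_simps sum_subtractf sum_distrib_left)
  then show ?thesis using W by (simp add: c_def)
qed

lemma Vs_all_zero:
  assumes "finite S" "\<forall>i\<in>S. a i \<ge> 0" "(\<Sum>i\<in>S. a i) = 0" "T \<subseteq> S"
  shows "Vs a b T = 0"
proof -
  have "\<forall>i\<in>S. a i = 0" using zero_weights[OF assms(1-3)] by blast
  then have "\<forall>i\<in>T. a i = 0" using assms(4) by blast
  then show ?thesis by (simp add: Vs_def)
qed

lemma Vs_gap:
  fixes a b :: "nat \<Rightarrow> real"
  assumes fin: "finite S" and nn: "\<forall>i\<in>S. a i \<ge> 0"
  shows "(\<Sum>k\<in>S. Vs a b (S-{k})) \<le> (real (card S) - 1) * Vs a b S"
    and "(\<Sum>k\<in>S. Vs a b (S-{k})) = (real (card S) - 1) * Vs a b S \<Longrightarrow> i \<in> S \<Longrightarrow> j \<in> S \<Longrightarrow>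
          a i * a j * (b i - b j)^2 = 0"
proof -
  have main: "(\<Sum>k\<in>S. Vs a b (S-{k})) \<le> (real (card S) - 1) * Vs a b S \<and>
     ((\<Sum>k\<in>S. Vs a b (S-{k})) = (real (card S) - 1) * Vs a b S \<longrightarrow> (\<forall>i\<in>S. \<forall>j\<in>S. a i * a j * (b i - b j)^2 = 0))"
  proof (cases "(\<Sum>i\<in>S. a i) = 0")
    case True
    have "\<forall>i\<in>S. a i = 0" using zero_weights[OF fin nn True] by blast
    then show ?thesis using Vs_all_zero[OF fin nn True] by simp
  next
    case False
    define W where "W = (\<Sum>i\<in>S. a i)"
    define c where "c = (\<Sum>i\<in>S. a i * b i) / (\<Sum>i\<in>S. a i)"
    define b' where "b' i = b i - c" for i
    have cen: "(\<Sum>i\<in>S. a i * b' i) = 0" unfolding b'_def c_def by (rule centering[OF fin nn False])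
    have sh: "Vs a b T = Vs a b' T" if "T \<subseteq> S" for T
      unfolding b'_def using Vs_shift_sub[OF fin nn that] by simp
    have Dk: "W - a k \<ge> 0" if "k \<in> S" for k
    proof -
      have "W - a k = (\<Sum>i\<in>S-{k}. a i)" using sum_remove_el[OF fin that, of a] W_def by simp
      also have "\<dots> \<ge> 0" using nn by (intro sum_nonneg) auto
      finally show ?thesis .
    qed
    have eq: "(real (card S) - 1) * Vs a b S - (\<Sum>k\<in>S. Vs a b (S-{k})) = (\<Sum>k\<in>S. (a k * b' k)^2 / (W - a k))"
    proof -
      have "(\<Sum>k\<in>S. Vs a b (S-{k})) = (\<Sum>k\<in>S. (\<Sum>i\<in>S-{k}. a i * (b' i)^2) - (a k * b' k)^2 / (W - a k))"
        using sh Vs_centered_facts(2)[OF fin nn cen] by (intro sum.cong) (auto simp: W_def)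
      also have "\<dots> = (real (card S) - 1) * (\<Sum>i\<in>S. a i * (b' i)^2) - (\<Sum>k\<in>S. (a k * b' k)^2 / (W - a k))"
        by (simp add: sum_subtractf sum_sum_remove1[OF fin])
      finally show ?thesis using sh[of S] Vs_centered_facts(1)[OF fin nn cen] by simp
    qed
    have nn2: "\<forall>k\<in>S. (a k * b' k)^2 / (W - a k) \<ge> 0" using Dk by simp
    show ?thesis
    proof
      show "(\<Sum>k\<in>S. Vs a b (S-{k})) \<le> (real (card S) - 1) * Vs a b S"
        using eq sum_nonneg[of S "\<lambda>k. (a k * b' k)^2 / (W - a k)"] nn2 by simp
      show "(\<Sum>k\<in>S. Vs a b (S-{k})) = (real (card S) - 1) * Vs a b S \<longrightarrow> (\<forall>i\<in>S. \<forall>j\<in>S. a i * a j * (b i - b j)^2 = 0)"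
      proof (intro impI ballI)
        fix i j assume e0: "(\<Sum>k\<in>S. Vs a b (S-{k})) = (real (card S) - 1) * Vs a b S" and i: "i \<in> S" and j: "j \<in> S"
        have "(\<Sum>k\<in>S. (a k * b' k)^2 / (W - a k)) = 0" using eq e0 by simp
        then have z: "\<forall>k\<in>S. (a k * b' k)^2 / (W - a k) = 0"
          using nn2 by (simp add: sum_nonneg_eq_0_iff[OF fin])
        show "a i * a j * (b i - b j)^2 = 0"
        proof (cases "i = j \<or> a i = 0 \<or> a j = 0")
          case True then show ?thesis by auto
        next
          case False
          then have ij: "i \<noteq> j" and ai: "a i > 0" and aj: "a j > 0" using nn i j by auto
          have le: "a j \<le> W - a i" if "i \<in> S" "j \<in> S" "i \<noteq> j" for i j
          proof -
            have "a j \<le> (\<Sum>k\<in>S-{i}. a k)" using that fin nn by (intro member_le_sum) auto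
            then show ?thesis using sum_remove_el[OF fin that(1), of a] W_def by simp
          qed
          have "W - a i > 0" using le[OF i j ij] aj by simp
          then have "b' i = 0" using z[rule_format, OF i] ai by auto
          have "W - a j > 0" using le[OF j i] ij ai by simp
          then have "b' j = 0" using z[rule_format, OF j] aj by auto
          show ?thesis using \<open>b' i = 0\<close> \<open>b' j = 0\<close> unfolding b'_def by simp
        qed
      qed
    qed
  qed
  show "(\<Sum>k\<in>S. Vs a b (S-{k})) \<le> (real (card S) - 1) * Vs a b S" using main by blast
  show "(\<Sum>k\<in>S. Vs a b (S-{k})) = (real (card S) - 1) * Vs a b S \<Longrightarrow> i \<in> S \<Longrightarrow> j \<in> S \<Longrightarrow>
          a i * a j * (b i - b j)^2 = 0" using main by blast
qed

lemma Vs_concave: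
  fixes a b :: "nat \<Rightarrow> real"
  assumes fin: "finite S" and nn: "\<forall>i\<in>S. a i \<ge> 0"
  shows "(real (card S) - 1) * (real (card S) - 2) * Vs a b S + (\<Sum>k\<in>S. \<Sum>l\<in>S-{k}. Vs a b (S-{k}-{l}))
     \<le> 2 * (real (card S) - 2) * (\<Sum>k\<in>S. Vs a b (S-{k}))"
proof (cases "(\<Sum>i\<in>S. a i) = 0")
  case True
  have z1: "Vs a b S = 0" by (rule Vs_all_zero[OF fin nn True]) simp
  have z2: "Vs a b (S-{k}) = 0" for k by (rule Vs_all_zero[OF fin nn True]) auto
  have z3: "Vs a b (S-{k}-{l}) = 0" for k l by (rule Vs_all_zero[OF fin nn True]) auto
  show ?thesis by (simp add: z1 z2 z3)
next
  case False
  define n where "n = real (card S)"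
  define W where "W = (\<Sum>i\<in>S. a i)"
  define c where "c = (\<Sum>i\<in>S. a i * b i) / (\<Sum>i\<in>S. a i)"
  define b' where "b' i = b i - c" for i
  define \<beta> where "\<beta> i = a i * b' i" for i
  have cen: "(\<Sum>i\<in>S. a i * b' i) = 0" unfolding b'_def c_def by (rule centering[OF fin nn False])
  have sh: "Vs a b T = Vs a b' T" if "T \<subseteq> S" for T
    unfolding b'_def using Vs_shift_sub[OF fin nn that] by simp
  define A where "A = (\<Sum>i\<in>S. a i * (b' i)^2)"
  define P where "P = (\<Sum>k\<in>S. (\<beta> k)^2 / (W - a k))"
  define R2 where "R2 = (\<Sum>k\<in>S. \<Sum>l\<in>S-{k}. (\<beta> k + \<beta> l)^2 / (W - a k - a l))"
  have e1: "Vs a b S = A" using sh[of S] Vs_centered_facts(1)[OF fin nn cen] A_def by simp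
  have e2: "(\<Sum>k\<in>S. Vs a b (S-{k})) = (n - 1) * A - P"
  proof -
    have "(\<Sum>k\<in>S. Vs a b (S-{k})) = (\<Sum>k\<in>S. (\<Sum>i\<in>S-{k}. a i * (b' i)^2) - (\<beta> k)^2 / (W - a k))"
      using sh Vs_centered_facts(2)[OF fin nn cen] by (intro sum.cong) (auto simp: W_def \<beta>_def)
    also have "\<dots> = (n - 1) * A - P"
      by (simp add: sum_subtractf sum_sum_remove1[OF fin] n_def A_def P_def)
    finally show ?thesis .
  qed
  have e3: "(\<Sum>k\<in>S. \<Sum>l\<in>S-{k}. Vs a b (S-{k}-{l})) = (n - 1) * (n - 2) * A - R2"
  proof -
    have "(\<Sum>k\<in>S. \<Sum>l\<in>S-{k}. Vs a b (S-{k}-{l})) = (\<Sum>k\<in>S. \<Sum>l\<in>S-{k}. (\<Sum>i\<in>S-{k}-{l}. a i * (b' i)^2) - (\<beta> k + \<beta> l)^2 / (W - a k - a l))"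
    proof (intro sum.cong refl)
      fix k l assume k: "k \<in> S" and l: "l \<in> S - {k}"
      have "S - {k} - {l} \<subseteq> S" by auto
      then show "Vs a b (S-{k}-{l}) = (\<Sum>i\<in>S-{k}-{l}. a i * (b' i)^2) - (\<beta> k + \<beta> l)^2 / (W - a k - a l)"
        using sh Vs_centered_facts(3)[OF fin nn cen k l] by (simp add: W_def \<beta>_def)
    qed
    also have "\<dots> = (\<Sum>k\<in>S. \<Sum>l\<in>S-{k}. \<Sum>i\<in>S-{k}-{l}. a i * (b' i)^2) - R2"
      by (simp add: sum_subtractf R2_def)
    also have "\<dots> = (n - 1) * (n - 2) * A - R2"
      by (simp add: sum_sum_remove2[OF fin] n_def A_def)
    finally show ?thesis .
  qed
  have st: "2 * (n - 2) * P \<le> R2"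
    unfolding P_def R2_def n_def
    using star_ineq[OF fin nn W_def, of \<beta>] cen nn by (auto simp: \<beta>_def)
  have "(n - 1) * (n - 2) * A + ((n - 1) * (n - 2) * A - R2) \<le> 2 * (n - 2) * ((n - 1) * A - P)"
  proof -
    have "2 * (n - 2) * ((n - 1) * A - P) - ((n - 1) * (n - 2) * A + ((n - 1) * (n - 2) * A - R2)) = R2 - 2 * (n - 2) * P"
      by (simp add: algebra_simps)
    then show ?thesis using st by linarith
  qed
  then show ?thesis unfolding e1 e2 e3 n_def by simp
qed

lemma G_eq:
  fixes a b :: "nat \<Rightarrow> real"
  shows "(\<Sum>i\<in>S. a i / (\<Sum>j\<in>S. a j) * b i) = (\<Sum>i\<in>S. a i * b i) / (\<Sum>j\<in>S. a j)"
  by (simp add: sum_divide_distrib)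

lemma H_sum:
  fixes a b :: "nat \<Rightarrow> real"
  shows "(\<Sum>k\<in>S. a k * (b k * (b k - (\<Sum>i\<in>S. a i / (\<Sum>j\<in>S. a j) * b i)))) = Vs a b S"
proof -
  define G where "G = (\<Sum>i\<in>S. a i / (\<Sum>j\<in>S. a j) * b i)"
  have "(\<Sum>k\<in>S. a k * (b k * (b k - G))) = (\<Sum>k\<in>S. a k * (b k)^2 - G * (a k * b k))"
    by (rule sum.cong) (auto simp: algebra_simps power2_eq_square)
  also have "\<dots> = (\<Sum>k\<in>S. a k * (b k)^2) - G * (\<Sum>k\<in>S. a k * b k)"
    by (simp add: sum_subtractf sum_distrib_left)
  also have "\<dots> = Vs a b S" unfolding G_def G_eq Vs_def by (simp add: power2_eq_square)
  finally show ?thesis unfolding G_def .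
qed

lemma H_bound:
  fixes a b :: "nat \<Rightarrow> real"
  assumes fin: "finite S" and k: "k \<in> S" and nn: "\<forall>i\<in>S. a i \<ge> 0"
  shows "\<bar>a k * (b k * (b k - (\<Sum>i\<in>S. a i / (\<Sum>j\<in>S. a j) * b i)))\<bar> \<le> 2 * (\<Sum>i\<in>S. a i * (b i)^2)"
proof -
  define W where "W = (\<Sum>j\<in>S. a j)"
  define Mb where "Mb = (\<Sum>i\<in>S. a i * b i)"
  define L where "L = (\<Sum>i\<in>S. a i * (b i)^2)"
  have G: "(\<Sum>i\<in>S. a i / (\<Sum>j\<in>S. a j) * b i) = Mb / W" unfolding Mb_def W_def by (rule G_eq)
  have ak: "a k \<ge> 0" using nn k by simp
  have akW: "a k \<le> W" unfolding W_def using fin k nn by (intro member_le_sum) auto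
  have akL: "a k * (b k)^2 \<le> L" unfolding L_def using fin k nn by (intro member_le_sum[of k S "\<lambda>i. a i * (b i)^2"]) auto
  have L0: "L \<ge> 0" unfolding L_def using nn by (intro sum_nonneg) auto
  have CS: "Mb^2 \<le> W * L" unfolding Mb_def W_def L_def by (rule CS_weighted[OF fin nn])
  show ?thesis
  proof (cases "W = 0")
    case True
    then have "a k = 0" using ak akW by simp
    then show ?thesis using L0 unfolding L_def by simp
  next
    case False
    then have Wp: "W > 0" using ak akW by simp
    have "(a k * b k * Mb)^2 = (a k * (a k * (b k)^2)) * Mb^2" by (simp add: power2_eq_square algebra_simps)
    also have "\<dots> \<le> (W * L) * (W * L)"
      using akW akL ak CS Wp L0 by (intro mult_mono) (auto intro: mult_mono)
    finally have "(a k * b k * Mb)^2 \<le> (W * L)^2" by (simp add: power2_eq_square)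
    then have "\<bar>a k * b k * Mb\<bar> \<le> W * L" using Wp L0 by (simp add: abs_le_square_iff[symmetric])
    then have t2: "\<bar>a k * b k * Mb / W\<bar> \<le> L" using Wp by (simp add: abs_div divide_le_eq mult.commute)
    have "a k * (b k * (b k - Mb / W)) = a k * (b k)^2 - a k * b k * Mb / W" by (simp add: algebra_simps power2_eq_square)
    then have "\<bar>a k * (b k * (b k - Mb / W))\<bar> \<le> \<bar>a k * (b k)^2\<bar> + \<bar>a k * b k * Mb / W\<bar>"
      using abs_triangle_ineq4[of "a k * (b k)^2" "a k * b k * Mb / W"] by (simp only:)
    also have "\<dots> \<le> L + L" using akL ak t2 by simp
    finally show ?thesis unfolding G L_def by simp
  qed
qed

definition interp :: "(nat \<Rightarrow> real) \<Rightarrow> real \<Rightarrow> real" where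
  "interp D x = D (nat \<lfloor>x\<rfloor>) + (x - real (nat \<lfloor>x\<rfloor>)) * (D (nat \<lfloor>x\<rfloor> + 1) - D (nat \<lfloor>x\<rfloor>))"

locale dseq =
  fixes D :: "nat \<Rightarrow> real"
  assumes D1: "D 1 = 0"
    and smono: "\<And>n. n \<ge> 1 \<Longrightarrow> D n < D (Suc n)"
    and conc: "\<And>n. n \<ge> 1 \<Longrightarrow> D (n + 2) - D (n + 1) \<le> D (n + 1) - D n"
begin

definition \<Delta> where "\<Delta> m = D (m + 1) - D m"

lemma Delta_pos: "n \<ge> 1 \<Longrightarrow> \<Delta> n > 0"
  using smono[of n] by (simp add: \<Delta>_def)

lemma Delta_anti: assumes "1 \<le> n" "n \<le> k" shows "\<Delta> k \<le> \<Delta> n"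
  using assms(2)
proof (induction k rule: dec_induct)
  case base then show ?case by simp
next
  case (step k)
  have "\<Delta> (Suc k) \<le> \<Delta> k" using conc[of k] step.hyps assms(1) by (simp add: \<Delta>_def add.commute)
  then show ?case using step.IH by simp
qed

lemma D_mono: assumes "1 \<le> n" "n \<le> k" shows "D n \<le> D k"
  using assms(2)
proof (induction k rule: dec_induct)
  case base then show ?case by simp
next
  case (step k)
  then show ?case using smono[of k] assms(1) by simp
qed

lemma D_nonneg: "1 \<le> n \<Longrightarrow> D n \<ge> 0"
  using D_mono[of 1 n] D1 by simp

lemma chord_up: assumes "1 \<le> n" "n \<le> k" shows "D k \<le> D n + (real k - real n) * \<Delta> n"
  using assms(2)
proof (induction k rule: dec_induct)
  case base then show ?case by simp
next
  case (step k)
  have "D (Suc k) = D k + \<Delta> k" by (simp add: \<Delta>_def)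
  also have "\<dots> \<le> D n + (real k - real n) * \<Delta> n + \<Delta> n"
    using step.IH Delta_anti[of n k] step.hyps assms(1) by simp
  finally show ?case by (simp add: algebra_simps)
qed

lemma chord_down: "1 \<le> k \<Longrightarrow> k \<le> n \<Longrightarrow> D k \<le> D n + (real k - real n) * \<Delta> n"
proof -
  assume k: "1 \<le> k" "k \<le> n"
  have "\<forall>j. 1 \<le> j \<and> j \<le> n \<and> n - j = d \<longrightarrow> D j \<le> D n + (real j - real n) * \<Delta> n" for d
  proof (induction d)
    case 0 then show ?case by auto
  next
    case (Suc d)
    show ?case
    proof (intro allI impI)
      fix j assume j: "1 \<le> j \<and> j \<le> n \<and> n - j = Suc d"
      then have j1: "1 \<le> j + 1" "j + 1 \<le> n" "n - (j + 1) = d" by auto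
      have IH: "D (j + 1) \<le> D n + (real (j + 1) - real n) * \<Delta> n" using Suc.IH j1 by blast
      have "\<Delta> n \<le> \<Delta> j" using Delta_anti[of j n] j by simp
      have "D j = D (j + 1) - \<Delta> j" by (simp add: \<Delta>_def)
      also have "\<dots> \<le> D n + (real (j + 1) - real n) * \<Delta> n - \<Delta> n" using IH \<open>\<Delta> n \<le> \<Delta> j\<close> by simp
      finally show "D j \<le> D n + (real j - real n) * \<Delta> n" by (simp add: algebra_simps)
    qed
  qed
  then show ?thesis using k by blast
qed

lemma chord: "1 \<le> k \<Longrightarrow> 1 \<le> n \<Longrightarrow> D k \<le> D n + (real k - real n) * \<Delta> n"
  using chord_up chord_down by (cases "n \<le> k") auto

lemma interp_eq: "interp D x = D (nat \<lfloor>x\<rfloor>) + (x - real (nat \<lfloor>x\<rfloor>)) * \<Delta> (nat \<lfloor>x\<rfloor>)"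
  by (simp add: interp_def \<Delta>_def)

lemma floor_facts:
  assumes "x \<ge> 1"
  shows "nat \<lfloor>x\<rfloor> \<ge> 1" "real (nat \<lfloor>x\<rfloor>) \<le> x" "x < real (nat \<lfloor>x\<rfloor>) + 1"
proof -
  have "\<lfloor>x\<rfloor> \<ge> 1" using assms by (simp add: le_floor_iff)
  then show "nat \<lfloor>x\<rfloor> \<ge> 1" by (subst le_nat_iff) auto
  have "real (nat \<lfloor>x\<rfloor>) = real_of_int \<lfloor>x\<rfloor>" using \<open>\<lfloor>x\<rfloor> \<ge> 1\<close> by simp
  then show "real (nat \<lfloor>x\<rfloor>) \<le> x" "x < real (nat \<lfloor>x\<rfloor>) + 1" by linarith+
qed

lemma support:
  assumes n: "1 \<le> n" and y: "y \<ge> 1"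
  shows "interp D y \<le> D n + (y - real n) * \<Delta> n"
proof -
  define m where "m = nat \<lfloor>y\<rfloor>"
  have m: "1 \<le> m" "real m \<le> y" "y < real m + 1" using floor_facts[OF y] m_def by auto
  have c1: "D m \<le> D n + (real m - real n) * \<Delta> n" using chord[OF m(1) n] .
  have c2: "D (m + 1) \<le> D n + (real (m + 1) - real n) * \<Delta> n" using chord[of "m+1" n] m n by simp
  have "interp D y = (real m + 1 - y) * D m + (y - real m) * D (m + 1)"
    unfolding interp_def m_def[symmetric] by (simp add: algebra_simps)
  also have "\<dots> \<le> (real m + 1 - y) * (D n + (real m - real n) * \<Delta> n) + (y - real m) * (D n + (real (m + 1) - real n) * \<Delta> n)"
    using c1 c2 m by (intro add_mono mult_left_mono) auto
  also have "\<dots> = D n + (y - real n) * \<Delta> n" by (simp add: algebra_simps)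
  finally show ?thesis .
qed

lemma interp_at: "1 \<le> x \<Longrightarrow> interp D x = D (nat \<lfloor>x\<rfloor>) + (x - real (nat \<lfloor>x\<rfloor>)) * \<Delta> (nat \<lfloor>x\<rfloor>)"
  by (rule interp_eq)

lemma interp_concave: "concave_on {1..} (interp D)"
  unfolding concave_on_def
proof (rule convex_onI)
  show "convex {1::real..}" by (rule convex_real_interval)
  fix t x y :: real assume t: "0 < t" "t < 1" and x: "x \<in> {1..}" and y: "y \<in> {1..}"
  define z where "z = (1 - t) * x + t * y"
  have z1: "z \<ge> 1" using x y t unfolding z_def
  proof -
    have "(1 - t) * x + t * y \<ge> (1 - t) * 1 + t * 1" using x y t by (intro add_mono mult_left_mono) auto
    then show "1 \<le> (1 - t) * x + t * y" by simp
  qed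
  define n where "n = nat \<lfloor>z\<rfloor>"
  have n: "1 \<le> n" using floor_facts[OF z1] n_def by simp
  have "interp D z = D n + (z - real n) * \<Delta> n" unfolding n_def by (rule interp_eq)
  also have "\<dots> = (1 - t) * (D n + (x - real n) * \<Delta> n) + t * (D n + (y - real n) * \<Delta> n)"
    unfolding z_def by (simp add: algebra_simps)
  also have "\<dots> \<ge> (1 - t) * interp D x + t * interp D y"
    using support[OF n] x y t by (intro add_mono mult_left_mono) auto
  finally show "- interp D ((1 - t) *\<^sub>R x + t *\<^sub>R y) \<le> (1 - t) * - interp D x + t * - interp D y"
    unfolding z_def by simp
qed

lemma interp_nonneg: "1 \<le> x \<Longrightarrow> interp D x \<ge> 0"
proof -
  assume x: "1 \<le> x"
  note f = floor_facts[OF x]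
  have "D (nat \<lfloor>x\<rfloor>) \<ge> 0" using D_nonneg f by simp
  moreover have "(x - real (nat \<lfloor>x\<rfloor>)) * \<Delta> (nat \<lfloor>x\<rfloor>) \<ge> 0" using f Delta_pos[of "nat \<lfloor>x\<rfloor>"] by simp
  ultimately show ?thesis unfolding interp_eq by simp
qed

lemma interp_smono: "strict_mono_on {1..} (interp D)"
proof (rule strict_mono_onI)
  fix x y :: real assume x: "x \<in> {1..}" and y: "y \<in> {1..}" and xy: "x < y"
  define n where "n = nat \<lfloor>x\<rfloor>"
  define m where "m = nat \<lfloor>y\<rfloor>"
  have fx: "1 \<le> n" "real n \<le> x" "x < real n + 1" using floor_facts[of x] x n_def by auto
  have fy: "1 \<le> m" "real m \<le> y" "y < real m + 1" using floor_facts[of y] y m_def by auto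
  have ix: "interp D x = D n + (x - real n) * \<Delta> n" unfolding n_def by (rule interp_eq)
  have iy: "interp D y = D m + (y - real m) * \<Delta> m" unfolding m_def by (rule interp_eq)
  have nm: "n \<le> m" unfolding n_def m_def using xy by (simp add: floor_mono nat_mono)
  show "interp D x < interp D y"
  proof (cases "n = m")
    case True
    then show ?thesis using ix iy xy Delta_pos[OF fx(1)] by simp
  next
    case False
    then have "n + 1 \<le> m" using nm by simp
    have "interp D x < D n + \<Delta> n" using ix fx Delta_pos[OF fx(1)] by (simp add: mult_less_cancel_right2)
    also have "\<dots> = D (n + 1)" by (simp add: \<Delta>_def)
    also have "\<dots> \<le> D m" using D_mono[of "n+1" m] \<open>n + 1 \<le> m\<close> by simp
    also have "\<dots> \<le> interp D y" using iy fy Delta_pos[OF fy(1)] by simp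
    finally show ?thesis .
  qed
qed

lemma interp_piece: "1 \<le> n \<Longrightarrow> continuous_on {real n..real n + 1} (interp D)"
proof -
  assume n: "1 \<le> n"
  have cont: "continuous_on {real n..real n + 1} (\<lambda>x. D n + (x - real n) * \<Delta> n)"
    by (intro continuous_intros)
  moreover have eq: "interp D x = D n + (x - real n) * \<Delta> n" if "x \<in> {real n..real n + 1}" for x
  proof (cases "x = real n + 1")
    case True
    have "nat \<lfloor>x\<rfloor> = n + 1" using True by simp
    then show ?thesis using True by (simp add: interp_eq \<Delta>_def)
  next
    case False
    then have "\<lfloor>x\<rfloor> = int n" using that by (simp add: floor_eq_iff)
    then have "nat \<lfloor>x\<rfloor> = n" by simp
    then show ?thesis by (simp add: interp_eq)
  qed
  show ?thesis by (rule continuous_on_eq[OF cont]) (simp add: eq)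
qed

lemma interp_cont: "continuous_on {1..} (interp D)"
proof -
  have c_int: "continuous_on {1<..} (interp D)"
  proof -
    have "convex_on {1..} (\<lambda>x. - interp D x)" using interp_concave by (simp add: concave_on_def)
    then have "convex_on {1<..} (\<lambda>x. - interp D x)" by (rule convex_on_subset) auto
    then have "continuous_on {1<..} (\<lambda>x. - (- interp D x))"
      by (intro continuous_intros convex_on_continuous) auto
    then show ?thesis by simp
  qed
  show ?thesis
    unfolding continuous_on_eq_continuous_within
  proof
    fix x :: real assume x: "x \<in> {1..}"
    show "continuous (at x within {1..}) (interp D)"
    proof (cases "x = 1")
      case True
      have "continuous (at x within {1..2}) (interp D)"
        using interp_piece[of 1] True by (simp add: continuous_on_eq_continuous_within)
      moreover have "at x within {1..} = at x within {1..2}"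
        by (rule at_within_nhd[where S="{0<..<2}"]) (use True in auto)
      ultimately show ?thesis by simp
    next
      case False
      then have "x \<in> {1<..}" using x by simp
      have "isCont (interp D) x"
        by (rule continuous_on_interior[OF c_int]) (use \<open>x \<in> {1<..}\<close> in \<open>simp add: interior_open\<close>)
      then show ?thesis by (rule continuous_at_imp_continuous_at_within)
    qed
  qed
qed

end

locale mtt =
  fixes M :: "'a measure" and p q f :: "'a \<Rightarrow> real"
  assumes sf: "sigma_finite_measure M"
    and pm[measurable]: "p \<in> borel_measurable M" and pnn: "\<And>x. x \<in> space M \<Longrightarrow> p x \<ge> 0"
    and pint: "(\<integral>\<^sup>+ x. ennreal (p x) \<partial>M) = 1"
    and qm[measurable]: "q \<in> borel_measurable M" and qnn: "\<And>x. x \<in> space M \<Longrightarrow> q x \<ge> 0"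
    and qint: "(\<integral>\<^sup>+ x. ennreal (q x) \<partial>M) = 1"
    and pq: "\<And>x. x \<in> space M \<Longrightarrow> p x > 0 \<Longrightarrow> q x > 0"
    and fm[measurable]: "f \<in> borel_measurable M"
    and f2: "integrable (density M p) (\<lambda>x. (f x)\<^sup>2)"
    and fmean: "(\<integral>x. f x \<partial>(density M p)) = 0"
    and fpos: "(\<integral>x. (f x)\<^sup>2 \<partial>(density M p)) > 0"
begin

abbreviation "Q \<equiv> density M (\<lambda>x. ennreal (q x))"
abbreviation "PP \<equiv> density M (\<lambda>x. ennreal (p x))"
abbreviation "w \<equiv> iw p q"
abbreviation "PQ I \<equiv> PiM I (\<lambda>_. Q)"

lemma w_eq: "w = (\<lambda>x. if p x > 0 then p x / q x else 0)"
  by (rule ext) (simp add: iw_def)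

lemma w_meas[measurable]: "w \<in> borel_measurable M"
  unfolding w_eq by measurable

lemma w_nn: "x \<in> space M \<Longrightarrow> w x \<ge> 0"
proof -
  assume x: "x \<in> space M"
  show ?thesis
  proof (cases "p x > 0")
    case True
    then have "q x > 0" using pq x by simp
    then show ?thesis using True by (simp add: iw_def)
  qed (simp add: iw_def)
qed

lemma qw: "x \<in> space M \<Longrightarrow> q x * w x = p x"
  using pnn pq by (auto simp: iw_def less_le)

lemma prob_Q: "prob_space Q"
proof (rule prob_spaceI)
  have "emeasure Q (space Q) = (\<integral>\<^sup>+ x. ennreal (q x) * indicator (space M) x \<partial>M)"
    by (simp add: emeasure_density)
  also have "\<dots> = (\<integral>\<^sup>+ x. ennreal (q x) \<partial>M)"
    by (intro nn_integral_cong) (simp add: indicator_def)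
  finally show "emeasure Q (space Q) = 1" using qint by simp
qed

lemma prob_PP: "prob_space PP"
proof (rule prob_spaceI)
  have "emeasure PP (space PP) = (\<integral>\<^sup>+ x. ennreal (p x) * indicator (space M) x \<partial>M)"
    by (simp add: emeasure_density)
  also have "\<dots> = (\<integral>\<^sup>+ x. ennreal (p x) \<partial>M)"
    by (intro nn_integral_cong) (simp add: indicator_def)
  finally show "emeasure PP (space PP) = 1" using pint by simp
qed

lemma PP_eq: "PP = density Q (\<lambda>x. ennreal (w x))"
proof -
  have "density Q (\<lambda>x. ennreal (w x)) = density M (\<lambda>x. ennreal (q x) * ennreal (w x))"
    by (rule density_density_eq) measurable
  also have "\<dots> = PP"
  proof (rule density_cong)
    show "AE x in M. ennreal (q x) * ennreal (w x) = ennreal (p x)"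
      using qw qnn w_nn by (intro AE_I2) (simp add: ennreal_mult[symmetric])
  qed measurable
  finally show ?thesis by simp
qed

lemma integral_PP: "g \<in> borel_measurable M \<Longrightarrow> integral\<^sup>L PP g = (\<integral>x. w x * g x \<partial>Q)"
  unfolding PP_eq by (subst integral_density) (auto simp: w_nn)

lemma integrable_PP: "g \<in> borel_measurable M \<Longrightarrow> integrable PP g \<longleftrightarrow> integrable Q (\<lambda>x. w x * g x)"
  unfolding PP_eq by (subst integrable_density) (auto simp: w_nn)

definition "nf2 = (\<integral>x. (f x)\<^sup>2 \<partial>PP)"

lemma int_wf2: "integrable Q (\<lambda>x. w x * (f x)\<^sup>2)" and integral_wf2: "(\<integral>x. w x * (f x)\<^sup>2 \<partial>Q) = nf2"
  using f2 integrable_PP[of "\<lambda>x. (f x)\<^sup>2"] integral_PP[of "\<lambda>x. (f x)\<^sup>2"] by (auto simp: nf2_def)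

lemma nf2_pos: "nf2 > 0" using fpos by (simp add: nf2_def)

lemma int_PP_f: "integrable PP f"
proof -
  interpret prob_space PP by (rule prob_PP)
  show ?thesis by (rule square_integrable_imp_integrable) (use f2 in auto)
qed

lemma int_wf: "integrable Q (\<lambda>x. w x * f x)" and integral_wf: "(\<integral>x. w x * f x \<partial>Q) = 0"
  using int_PP_f integrable_PP[of f] integral_PP[of f] fmean by auto

lemma int_wabsf: "integrable Q (\<lambda>x. w x * \<bar>f x\<bar>)"
proof -
  have "integrable PP (\<lambda>x. \<bar>f x\<bar>)" using int_PP_f by simp
  then show ?thesis using integrable_PP[of "\<lambda>x. \<bar>f x\<bar>"] by simp
qed

lemma int_w: "integrable Q w" and integral_w: "(\<integral>x. w x \<partial>Q) = 1"
proof -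
  interpret prob_space PP by (rule prob_PP)
  have "integrable PP (\<lambda>x. 1::real)" by simp
  then show "integrable Q w" using integrable_PP[of "\<lambda>x. 1"] by simp
  have "(\<integral>x. 1 \<partial>PP) = (1::real)" using prob_space by simp
  then show "(\<integral>x. w x \<partial>Q) = 1" using integral_PP[of "\<lambda>x. 1"] by simp
qed

end

context mtt begin

lemma prob_PQ: "prob_space (PQ I)"
  by (rule prob_space_PiM) (rule prob_Q)

lemma comp_meas:
  fixes g :: "'a \<Rightarrow> real" and I :: "nat set"
  assumes "i \<in> I" "g \<in> borel_measurable M"
  shows "(\<lambda>z. g (z i)) \<in> borel_measurable (PQ I)"
proof -
  have "(\<lambda>z. z i) \<in> measurable (PQ I) Q" using assms(1) by (rule measurable_component_singleton)
  moreover have "g \<in> borel_measurable Q" using assms(2) by simp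
  ultimately show ?thesis by (rule measurable_compose)
qed

lemma distr_comp: "i \<in> I \<Longrightarrow> distr (PQ I) Q (\<lambda>z. z i) = Q"
  by (rule distr_PiM_component) (auto intro: prob_Q)

lemma comp_int:
  fixes g :: "'a \<Rightarrow> real" and I :: "nat set"
  assumes "i \<in> I" "integrable Q g"
  shows "integrable (PQ I) (\<lambda>z. g (z i))"
proof -
  have gm: "g \<in> borel_measurable Q" using assms(2) by simp
  have "integrable (distr (PQ I) Q (\<lambda>z. z i)) g" using assms distr_comp[OF assms(1)] by simp
  then show ?thesis
    using integrable_distr_eq[OF measurable_component_singleton[OF assms(1), of "\<lambda>_. Q"] gm] by simp
qed

lemma comp_integral:
  fixes g :: "'a \<Rightarrow> real" and I :: "nat set"
  assumes "i \<in> I" "g \<in> borel_measurable M"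
  shows "(\<integral>z. g (z i) \<partial>PQ I) = integral\<^sup>L Q g"
proof -
  have gm: "g \<in> borel_measurable Q" using assms(2) by simp
  have "integral\<^sup>L Q g = integral\<^sup>L (distr (PQ I) Q (\<lambda>z. z i)) g" using assms distr_comp[OF assms(1)] by simp
  also have "\<dots> = (\<integral>z. g (z i) \<partial>PQ I)"
    by (rule integral_distr[OF measurable_component_singleton[OF assms(1), of "\<lambda>_. Q"] gm])
  finally show ?thesis by simp
qed

lemma reindex_meas:
  fixes I K :: "nat set" and t :: "nat \<Rightarrow> nat"
  assumes "t \<in> I \<rightarrow> K"
  shows "(\<lambda>\<omega>. \<lambda>n\<in>I. \<omega> (t n)) \<in> measurable (PQ K) (PQ I)"
  using assms by (intro measurable_restrict measurable_component_singleton) auto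

lemma reindex_distr:
  fixes I K :: "nat set" and t :: "nat \<Rightarrow> nat"
  assumes "inj_on t I" "t \<in> I \<rightarrow> K"
  shows "distr (PQ K) (PQ I) (\<lambda>\<omega>. \<lambda>n\<in>I. \<omega> (t n)) = PQ I"
  using distr_PiM_reindex[of K "\<lambda>_. Q" t I] assms prob_Q by simp

lemma reindex_integral:
  fixes g :: "(nat \<Rightarrow> 'a) \<Rightarrow> real" and I K :: "nat set" and t :: "nat \<Rightarrow> nat"
  assumes "inj_on t I" "t \<in> I \<rightarrow> K" "g \<in> borel_measurable (PQ I)"
  shows "(\<integral>\<omega>. g (\<lambda>n\<in>I. \<omega> (t n)) \<partial>PQ K) = integral\<^sup>L (PQ I) g"
proof -
  have "integral\<^sup>L (PQ I) g = integral\<^sup>L (distr (PQ K) (PQ I) (\<lambda>\<omega>. \<lambda>n\<in>I. \<omega> (t n))) g"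
    using reindex_distr[OF assms(1,2)] by simp
  also have "\<dots> = (\<integral>\<omega>. g (\<lambda>n\<in>I. \<omega> (t n)) \<partial>PQ K)"
    by (rule integral_distr[OF reindex_meas[OF assms(2)] assms(3)])
  finally show ?thesis by simp
qed

lemma reindex_integrable:
  fixes g :: "(nat \<Rightarrow> 'a) \<Rightarrow> real" and I K :: "nat set" and t :: "nat \<Rightarrow> nat"
  assumes "inj_on t I" "t \<in> I \<rightarrow> K" "g \<in> borel_measurable (PQ I)"
  shows "integrable (PQ K) (\<lambda>\<omega>. g (\<lambda>n\<in>I. \<omega> (t n))) \<longleftrightarrow> integrable (PQ I) g"
proof -
  have "integrable (PQ I) g \<longleftrightarrow> integrable (distr (PQ K) (PQ I) (\<lambda>\<omega>. \<lambda>n\<in>I. \<omega> (t n))) g"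
    using reindex_distr[OF assms(1,2)] by simp
  also have "\<dots> \<longleftrightarrow> integrable (PQ K) (\<lambda>\<omega>. g (\<lambda>n\<in>I. \<omega> (t n)))"
    by (rule integrable_distr_eq[OF reindex_meas[OF assms(2)] assms(3)])
  finally show ?thesis by simp
qed

definition Vz :: "nat set \<Rightarrow> (nat \<Rightarrow> 'a) \<Rightarrow> real" where
  "Vz S z = Vs (\<lambda>i. w (z i)) (\<lambda>i. f (z i)) S"

definition Lz :: "nat set \<Rightarrow> (nat \<Rightarrow> 'a) \<Rightarrow> real" where
  "Lz S z = (\<Sum>i\<in>S. w (z i) * (f (z i))\<^sup>2)"

lemma space_PQ_comp: "z \<in> space (PQ I) \<Longrightarrow> i \<in> I \<Longrightarrow> z i \<in> space M"
  by (auto simp: space_PiM)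

lemma Vz_meas:
  assumes "S \<subseteq> I" "finite S"
  shows "Vz S \<in> borel_measurable (PQ I)"
proof -
  have m1: "(\<lambda>z. w (z i) * (f (z i))\<^sup>2) \<in> borel_measurable (PQ I)" if "i \<in> S" for i
    using that assms by (intro comp_meas[of i I "\<lambda>x. w x * (f x)\<^sup>2"]) auto
  have m2: "(\<lambda>z. w (z i) * f (z i)) \<in> borel_measurable (PQ I)" if "i \<in> S" for i
    using that assms by (intro comp_meas[of i I "\<lambda>x. w x * f x"]) auto
  have m3: "(\<lambda>z. w (z i)) \<in> borel_measurable (PQ I)" if "i \<in> S" for i
    using that assms by (intro comp_meas[of i I w]) auto
  show ?thesis unfolding Vz_def[abs_def] Vs_def
    by (intro borel_measurable_diff borel_measurable_divide borel_measurable_power borel_measurable_sum m1 m2 m3)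
qed

lemma Lz_int:
  assumes "S \<subseteq> I" "finite S"
  shows "integrable (PQ I) (Lz S)"
proof -
  have h: "integrable (PQ I) (\<lambda>z. w (z i) * (f (z i))\<^sup>2)" if "i \<in> S" for i
    using comp_int[of i I "\<lambda>x. w x * (f x)\<^sup>2"] int_wf2 assms that by auto
  show ?thesis unfolding Lz_def[abs_def] by (rule Bochner_Integration.integrable_sum) (rule h)
qed

lemma wz_nn:
  assumes z: "z \<in> space (PQ I)" and S: "S \<subseteq> I"
  shows "\<forall>i\<in>S. w (z i) \<ge> 0"
proof
  fix i assume "i \<in> S"
  then have "z i \<in> space M" using space_PQ_comp[OF z] S by auto
  then show "w (z i) \<ge> 0" by (rule w_nn)
qed

lemma Vz_nonneg:
  assumes z: "z \<in> space (PQ I)" and S: "S \<subseteq> I" "finite S"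
  shows "Vz S z \<ge> 0"
  unfolding Vz_def using wz_nn[OF z S(1)] S(2) by (intro Vs_nonneg) auto

lemma Vz_le: "z \<in> space (PQ I) \<Longrightarrow> S \<subseteq> I \<Longrightarrow> finite S \<Longrightarrow> Vz S z \<le> Lz S z"
proof -
  assume z: "z \<in> space (PQ I)" and S: "S \<subseteq> I" "finite S"
  have "(\<Sum>i\<in>S. w (z i) * f (z i))\<^sup>2 / (\<Sum>i\<in>S. w (z i)) \<ge> 0"
    using wz_nn[OF z S(1)] by (intro divide_nonneg_nonneg sum_nonneg) auto
  then show ?thesis unfolding Vz_def Vs_def Lz_def by simp
qed

lemma Vz_int:
  assumes "S \<subseteq> I" "finite S"
  shows "integrable (PQ I) (Vz S)"
proof (rule Bochner_Integration.integrable_bound[OF Lz_int[OF assms] Vz_meas[OF assms]])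
  show "AE z in PQ I. norm (Vz S z) \<le> norm (Lz S z)"
  proof (intro AE_I2)
    fix z assume z: "z \<in> space (PQ I)"
    show "norm (Vz S z) \<le> norm (Lz S z)"
      using Vz_nonneg[OF z assms] Vz_le[OF z assms] by simp
  qed
qed

definition T :: "nat \<Rightarrow> real" where
  "T m = (\<integral>z. Vz {1..m} z \<partial>PQ {1..m})"

lemma Vz_reindex:
  assumes "bij_betw t J S"
  shows "Vz J (\<lambda>n\<in>J. \<omega> (t n)) = Vz S \<omega>"
proof -
  have "Vz J (\<lambda>n\<in>J. \<omega> (t n)) = Vs (\<lambda>i. w (\<omega> (t i))) (\<lambda>i. f (\<omega> (t i))) J"
    unfolding Vz_def Vs_def by (intro arg_cong2[where f="(-)"] arg_cong2[where f="(/)"] arg_cong2[where f="power"] sum.cong refl) auto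
  also have "\<dots> = Vz S \<omega>"
    unfolding Vz_def Vs_def
    using sum.reindex_bij_betw[OF assms, of "\<lambda>i. w (\<omega> i) * (f (\<omega> i))\<^sup>2"]
      sum.reindex_bij_betw[OF assms, of "\<lambda>i. w (\<omega> i) * f (\<omega> i)"]
      sum.reindex_bij_betw[OF assms, of "\<lambda>i. w (\<omega> i)"] by simp
  finally show ?thesis .
qed

lemma T_card:
  assumes I: "finite I" and S: "S \<subseteq> I" and card: "card S = m"
  shows "(\<integral>z. Vz S z \<partial>PQ I) = T m"
proof -
  have finS: "finite S" using I S by (rule finite_subset[rotated])
  obtain t where t: "bij_betw t {1..m} S"
    using finS card by (metis bij_betw_iff_card card_atLeastAtMost diff_Suc_1 finite_atLeastAtMost)
  have inj: "inj_on t {1..m}" using t by (rule bij_betw_imp_inj_on)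
  have tI: "t \<in> {1..m} \<rightarrow> I" using bij_betwE[OF t] S by auto
  have "(\<integral>\<omega>. Vz {1..m} (\<lambda>n\<in>{1..m}. \<omega> (t n)) \<partial>PQ I) = T m"
    unfolding T_def by (rule reindex_integral[OF inj tI Vz_meas]) auto
  then show ?thesis using Vz_reindex[OF t] by simp
qed

end

context mtt begin

lemma card_rem1: "finite S \<Longrightarrow> k \<in> S \<Longrightarrow> card (S - {k}) = card S - 1"
  by simp

lemma T_sum1:
  assumes n: "n \<ge> 1"
  defines "S \<equiv> {1..n+1}"
  shows "(\<integral>z. (\<Sum>k\<in>S. Vz (S-{k}) z) \<partial>PQ S) = real (n+1) * T n"
proof -
  have fin: "finite S" unfolding S_def by simp
  have "(\<integral>z. (\<Sum>k\<in>S. Vz (S-{k}) z) \<partial>PQ S) = (\<Sum>k\<in>S. (\<integral>z. Vz (S-{k}) z \<partial>PQ S))"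
    using fin by (intro Bochner_Integration.integral_sum Vz_int) auto
  also have "\<dots> = (\<Sum>k\<in>S. T n)"
  proof (rule sum.cong[OF refl])
    fix k assume k: "k \<in> S"
    have "card (S - {k}) = n" using k fin unfolding S_def by simp
    then show "(\<integral>z. Vz (S-{k}) z \<partial>PQ S) = T n" using fin by (intro T_card) auto
  qed
  also have "\<dots> = real (n+1) * T n" unfolding S_def by simp
  finally show ?thesis .
qed

lemma T_sum2:
  assumes n: "n \<ge> 1"
  defines "S \<equiv> {1..n+2}"
  shows "(\<integral>z. (\<Sum>k\<in>S. \<Sum>l\<in>S-{k}. Vz (S-{k}-{l}) z) \<partial>PQ S) = real (n+2) * real (n+1) * T n"
proof -
  have fin: "finite S" unfolding S_def by simp
  have "(\<integral>z. (\<Sum>k\<in>S. \<Sum>l\<in>S-{k}. Vz (S-{k}-{l}) z) \<partial>PQ S) = (\<Sum>k\<in>S. \<Sum>l\<in>S-{k}. (\<integral>z. Vz (S-{k}-{l}) z \<partial>PQ S))"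
  proof -
    have "(\<integral>z. (\<Sum>k\<in>S. \<Sum>l\<in>S-{k}. Vz (S-{k}-{l}) z) \<partial>PQ S) = (\<Sum>k\<in>S. (\<integral>z. (\<Sum>l\<in>S-{k}. Vz (S-{k}-{l}) z) \<partial>PQ S))"
      using fin by (intro Bochner_Integration.integral_sum Bochner_Integration.integrable_sum Vz_int) auto
    also have "\<dots> = (\<Sum>k\<in>S. \<Sum>l\<in>S-{k}. (\<integral>z. Vz (S-{k}-{l}) z \<partial>PQ S))"
      using fin by (intro sum.cong refl Bochner_Integration.integral_sum Vz_int) auto
    finally show ?thesis .
  qed
  also have "\<dots> = (\<Sum>k\<in>S. \<Sum>l\<in>S-{k}. T n)"
  proof (intro sum.cong refl)
    fix k l assume k: "k \<in> S" and l: "l \<in> S - {k}"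
    have "card (S - {k} - {l}) = n" using k l fin unfolding S_def by (simp add: card_Diff_singleton_if)
    then show "(\<integral>z. Vz (S-{k}-{l}) z \<partial>PQ S) = T n" using fin by (intro T_card) auto
  qed
  also have "\<dots> = real (n+2) * real (n+1) * T n"
    using fin unfolding S_def by (simp add: card_Diff_singleton_if)
  finally show ?thesis .
qed

lemma T_mono:
  assumes n: "n \<ge> 1"
  shows "real (n+1) * T n \<le> real n * T (n+1)"
proof -
  define S where "S = {1..n+1}"
  have fin: "finite S" unfolding S_def by simp
  have cS: "card S = n + 1" unfolding S_def by simp
  have "(\<integral>z. (\<Sum>k\<in>S. Vz (S-{k}) z) \<partial>PQ S) \<le> (\<integral>z. real n * Vz S z \<partial>PQ S)"
  proof (rule Bochner_Integration.integral_mono)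
    show "integrable (PQ S) (\<lambda>z. \<Sum>k\<in>S. Vz (S-{k}) z)" using fin by (intro Bochner_Integration.integrable_sum Vz_int) auto
    show "integrable (PQ S) (\<lambda>z. real n * Vz S z)" using fin by (intro integrable_mult_right Vz_int) auto
    fix z assume z: "z \<in> space (PQ S)"
    have "finite S" "\<forall>i\<in>S. w (z i) \<ge> 0" using fin wz_nn[OF z] by auto
    from Vs_gap(1)[OF this, of "\<lambda>i. f (z i)"]
    show "(\<Sum>k\<in>S. Vz (S-{k}) z) \<le> real n * Vz S z" unfolding Vz_def cS by simp
  qed
  also have "\<dots> = real n * T (n+1)" unfolding T_def S_def by simp
  finally show ?thesis using T_sum1[OF n] unfolding S_def by simp
qed

lemma T_conc:
  assumes n: "n \<ge> 1"
  shows "real (n+1) * real n * T (n+2) + real (n+2) * real (n+1) * T n \<le> 2 * real n * (real (n+2) * T (n+1))"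
proof -
  define S where "S = {1..n+2}"
  have fin: "finite S" unfolding S_def by simp
  have cS: "card S = n + 2" unfolding S_def by simp
  have "(\<integral>z. real (n+1) * real n * Vz S z + (\<Sum>k\<in>S. \<Sum>l\<in>S-{k}. Vz (S-{k}-{l}) z) \<partial>PQ S)
      \<le> (\<integral>z. 2 * real n * (\<Sum>k\<in>S. Vz (S-{k}) z) \<partial>PQ S)"
  proof (rule Bochner_Integration.integral_mono)
    show "integrable (PQ S) (\<lambda>z. real (n+1) * real n * Vz S z + (\<Sum>k\<in>S. \<Sum>l\<in>S-{k}. Vz (S-{k}-{l}) z))"
      using fin by (intro Bochner_Integration.integrable_add integrable_mult_right Bochner_Integration.integrable_sum Vz_int) auto
    show "integrable (PQ S) (\<lambda>z. 2 * real n * (\<Sum>k\<in>S. Vz (S-{k}) z))"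
      using fin by (intro integrable_mult_right Bochner_Integration.integrable_sum Vz_int) auto
    fix z assume z: "z \<in> space (PQ S)"
    have "finite S" "\<forall>i\<in>S. w (z i) \<ge> 0" using fin wz_nn[OF z] by auto
    from Vs_concave[OF this, of "\<lambda>i. f (z i)"]
    show "real (n+1) * real n * Vz S z + (\<Sum>k\<in>S. \<Sum>l\<in>S-{k}. Vz (S-{k}-{l}) z) \<le> 2 * real n * (\<Sum>k\<in>S. Vz (S-{k}) z)"
      unfolding Vz_def cS by (simp add: algebra_simps)
  qed
  moreover have "(\<integral>z. real (n+1) * real n * Vz S z + (\<Sum>k\<in>S. \<Sum>l\<in>S-{k}. Vz (S-{k}-{l}) z) \<partial>PQ S)
      = real (n+1) * real n * T (n+2) + real (n+2) * real (n+1) * T n"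
  proof -
    have "(\<integral>z. real (n+1) * real n * Vz S z + (\<Sum>k\<in>S. \<Sum>l\<in>S-{k}. Vz (S-{k}-{l}) z) \<partial>PQ S)
       = (\<integral>z. real (n+1) * real n * Vz S z \<partial>PQ S) + (\<integral>z. (\<Sum>k\<in>S. \<Sum>l\<in>S-{k}. Vz (S-{k}-{l}) z) \<partial>PQ S)"
      using fin by (intro Bochner_Integration.integral_add integrable_mult_right Bochner_Integration.integrable_sum Vz_int) auto
    also have "(\<integral>z. real (n+1) * real n * Vz S z \<partial>PQ S) = real (n+1) * real n * T (n+2)"
      unfolding T_def S_def by simp
    also have "(\<integral>z. (\<Sum>k\<in>S. \<Sum>l\<in>S-{k}. Vz (S-{k}-{l}) z) \<partial>PQ S) = real (n+2) * real (n+1) * T n"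
      unfolding S_def by (rule T_sum2[OF n])
    finally show ?thesis .
  qed
  moreover have "(\<integral>z. 2 * real n * (\<Sum>k\<in>S. Vz (S-{k}) z) \<partial>PQ S) = 2 * real n * (real (n+2) * T (n+1))"
  proof -
    have "(\<integral>z. (\<Sum>k\<in>S. Vz (S-{k}) z) \<partial>PQ S) = real (n+2) * T (n+1)"
      using T_sum1[of "n+1"] n unfolding S_def by (simp add: add.assoc)
    then show ?thesis by simp
  qed
  ultimately show ?thesis by linarith
qed

end

context mtt begin

lemma sfQ: "sigma_finite_measure Q"
proof -
  interpret Qp: prob_space Q by (rule prob_Q)
  show ?thesis by unfold_locales
qed

lemma prod_two:
  fixes F :: "nat \<Rightarrow> real"
  assumes "finite S" "i \<in> S" "j \<in> S" "i \<noteq> j" "\<forall>k\<in>S-{i}-{j}. F k = 1"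
  shows "(\<Prod>k\<in>S. F k) = F i * F j"
proof -
  have a: "(\<Prod>k\<in>S. F k) = F i * (\<Prod>k\<in>S-{i}. F k)" using assms(1,2) by (rule prod.remove)
  have b: "(\<Prod>k\<in>S-{i}. F k) = F j * (\<Prod>k\<in>S-{i}-{j}. F k)"
    using assms(1,3,4) by (intro prod.remove) auto
  have c: "(\<Prod>k\<in>S-{i}-{j}. F k) = 1" using assms(5) by (intro prod.neutral) blast
  show ?thesis using a b c by simp
qed

lemma pair_integral:
  fixes g h :: "'a \<Rightarrow> real" and S :: "nat set"
  assumes fin: "finite S" and ij: "i \<in> S" "j \<in> S" "i \<noteq> j" and gi: "integrable Q g" and hi: "integrable Q h"
  shows "integrable (PQ S) (\<lambda>z. g (z i) * h (z j))"
    and "(\<integral>z. g (z i) * h (z j) \<partial>PQ S) = integral\<^sup>L Q g * integral\<^sup>L Q h"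
proof -
  interpret Qp: prob_space Q by (rule prob_Q)
  interpret P: product_sigma_finite "\<lambda>_::nat. Q" by unfold_locales
  have i1: "Qp.prob (space M) = 1" using Qp.prob_space by simp
  define F where "F k = (if k = i then g else if k = j then h else (\<lambda>_. 1::real))" for k
  have Fi: "integrable Q (F k)" for k unfolding F_def using gi hi by auto
  have eq: "(\<Prod>k\<in>S. F k (z k)) = g (z i) * h (z j)" for z
    using prod_two[OF fin ij, of "\<lambda>k. F k (z k)"] ij by (simp add: F_def)
  have "integrable (PQ S) (\<lambda>z. \<Prod>k\<in>S. F k (z k))" by (rule P.product_integrable_prod[OF fin]) (rule Fi)
  then show "integrable (PQ S) (\<lambda>z. g (z i) * h (z j))" unfolding eq .
  have "(\<integral>z. (\<Prod>k\<in>S. F k (z k)) \<partial>PQ S) = (\<Prod>k\<in>S. integral\<^sup>L Q (F k))"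
    by (rule P.product_integral_prod[OF fin]) (rule Fi)
  also have "\<dots> = integral\<^sup>L Q (F i) * integral\<^sup>L Q (F j)"
    using ij by (intro prod_two[OF fin ij]) (auto simp: F_def i1)
  finally show "(\<integral>z. g (z i) * h (z j) \<partial>PQ S) = integral\<^sup>L Q g * integral\<^sup>L Q h"
    unfolding eq using ij by (simp add: F_def)
qed

lemma phi_integral:
  fixes S :: "nat set"
  assumes fin: "finite S" and S: "1 \<in> S" "2 \<in> S"
  shows "integrable (PQ S) (\<lambda>z. w (z 1) * w (z 2) * (f (z 1) - f (z 2))\<^sup>2)"
    and "(\<integral>z. w (z 1) * w (z 2) * (f (z 1) - f (z 2))\<^sup>2 \<partial>PQ S) = 2 * nf2"
proof -
  have ij: "(1::nat) \<noteq> 2" by simp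
  have e: "w (z 1) * w (z 2) * (f (z 1) - f (z 2))\<^sup>2 =
     (w (z 1) * (f (z 1))\<^sup>2) * w (z 2) + w (z 1) * (w (z 2) * (f (z 2))\<^sup>2) - 2 * ((w (z 1) * f (z 1)) * (w (z 2) * f (z 2)))" for z
    by (simp add: power2_eq_square algebra_simps)
  note p1 = pair_integral[OF fin S ij int_wf2 int_w]
  note p2 = pair_integral[OF fin S ij int_w int_wf2]
  note p3 = pair_integral[OF fin S ij int_wf int_wf]
  show "integrable (PQ S) (\<lambda>z. w (z 1) * w (z 2) * (f (z 1) - f (z 2))\<^sup>2)"
    unfolding e using p1(1) p2(1) p3(1) by (intro Bochner_Integration.integrable_diff Bochner_Integration.integrable_add integrable_mult_right) auto
  have "(\<integral>z. w (z 1) * w (z 2) * (f (z 1) - f (z 2))\<^sup>2 \<partial>PQ S) =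
     (\<integral>z. (w (z 1) * (f (z 1))\<^sup>2) * w (z 2) \<partial>PQ S) + (\<integral>z. w (z 1) * (w (z 2) * (f (z 2))\<^sup>2) \<partial>PQ S)
      - 2 * (\<integral>z. (w (z 1) * f (z 1)) * (w (z 2) * f (z 2)) \<partial>PQ S)"
    unfolding e using p1(1) p2(1) p3(1) by simp
  also have "\<dots> = 2 * nf2" using p1(2) p2(2) p3(2) integral_wf2 integral_w integral_wf by simp
  finally show "(\<integral>z. w (z 1) * w (z 2) * (f (z 1) - f (z 2))\<^sup>2 \<partial>PQ S) = 2 * nf2" .
qed

lemma T_strict:
  assumes n: "n \<ge> 1"
  shows "real (n+1) * T n < real n * T (n+1)"
proof (rule ccontr)
  assume "\<not> ?thesis"
  then have eq: "real (n+1) * T n = real n * T (n+1)" using T_mono[OF n] by simp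
  define S where "S = {1..n+1}"
  have fin: "finite S" unfolding S_def by simp
  have cS: "card S = n + 1" unfolding S_def by simp
  have S12: "1 \<in> S" "2 \<in> S" using n unfolding S_def by auto
  define G where "G z = real n * Vz S z - (\<Sum>k\<in>S. Vz (S-{k}) z)" for z
  have Gi: "integrable (PQ S) G" unfolding G_def[abs_def]
    using fin by (intro Bochner_Integration.integrable_diff integrable_mult_right Bochner_Integration.integrable_sum Vz_int) auto
  have Gnn: "G z \<ge> 0" if z: "z \<in> space (PQ S)" for z
  proof -
    have "finite S" "\<forall>i\<in>S. w (z i) \<ge> 0" using fin wz_nn[OF z] by auto
    from Vs_gap(1)[OF this, of "\<lambda>i. f (z i)"] show ?thesis unfolding G_def Vz_def cS by simp
  qed
  have "integral\<^sup>L (PQ S) G = real n * T (n+1) - real (n+1) * T n"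
  proof -
    have "integral\<^sup>L (PQ S) G = (\<integral>z. real n * Vz S z \<partial>PQ S) - (\<integral>z. (\<Sum>k\<in>S. Vz (S-{k}) z) \<partial>PQ S)"
      unfolding G_def using fin by (intro Bochner_Integration.integral_diff integrable_mult_right Bochner_Integration.integrable_sum Vz_int) auto
    also have "(\<integral>z. real n * Vz S z \<partial>PQ S) = real n * T (n+1)" unfolding T_def S_def by simp
    also have "(\<integral>z. (\<Sum>k\<in>S. Vz (S-{k}) z) \<partial>PQ S) = real (n+1) * T n" unfolding S_def by (rule T_sum1[OF n])
    finally show ?thesis .
  qed
  then have "integral\<^sup>L (PQ S) G = 0" using eq by simp
  then have "AE z in PQ S. G z = 0"
    using integral_nonneg_eq_0_iff_AE[OF Gi] Gnn by (simp add: AE_I2)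
  then have ae: "AE z in PQ S. w (z 1) * w (z 2) * (f (z 1) - f (z 2))\<^sup>2 = 0"
  proof (rule AE_mp, intro AE_I2 impI)
    fix z assume z: "z \<in> space (PQ S)" and G0: "G z = 0"
    have "finite S" "\<forall>i\<in>S. w (z i) \<ge> 0" using fin wz_nn[OF z] by auto
    note gap2 = Vs_gap(2)[OF this, of "\<lambda>i. f (z i)"]
    have "(\<Sum>k\<in>S. Vz (S-{k}) z) = real n * Vz S z" using G0 unfolding G_def by simp
    then show "w (z 1) * w (z 2) * (f (z 1) - f (z 2))\<^sup>2 = 0"
      using gap2[OF _ S12] unfolding Vz_def cS by simp
  qed
  have "(\<integral>z. w (z 1) * w (z 2) * (f (z 1) - f (z 2))\<^sup>2 \<partial>PQ S) = 0"
    by (rule integral_eq_zero_AE[OF ae])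
  then show False using phi_integral(2)[OF fin S12] nf2_pos by simp
qed

end

context mtt begin

definition Gz :: "nat \<Rightarrow> (nat \<Rightarrow> 'a) \<Rightarrow> real" where
  "Gz N z = (\<Sum>i = 1..N. w (z i) / (\<Sum>j = 1..N. w (z j)) * f (z i))"

definition Hk :: "nat \<Rightarrow> nat \<Rightarrow> (nat \<Rightarrow> 'a) \<Rightarrow> real" where
  "Hk N k z = w (z k) * (f (z k) * (f (z k) - Gz N z))"

lemma PN_eq: "N \<ge> 2 \<Longrightarrow> PN M p q N f x = (\<integral>z. Gz N (z(1 := x)) \<partial>PQ {2..N})"
  by (simp add: PN_def Gz_def Let_def)

lemma Gz_meas: "Gz N \<in> borel_measurable (PQ {1..N})"
proof -
  have m3: "(\<lambda>z. w (z i)) \<in> borel_measurable (PQ {1..N})" if "i \<in> {1..N}" for i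
    using that by (intro comp_meas[of i "{1..N}" w]) auto
  have m4: "(\<lambda>z. f (z i)) \<in> borel_measurable (PQ {1..N})" if "i \<in> {1..N}" for i
    using that by (intro comp_meas[of i "{1..N}" f]) auto
  show ?thesis unfolding Gz_def[abs_def]
    by (intro borel_measurable_sum borel_measurable_times borel_measurable_divide m3 m4)
qed

lemma Hk_meas: "k \<in> {1..N} \<Longrightarrow> Hk N k \<in> borel_measurable (PQ {1..N})"
proof -
  assume k: "k \<in> {1..N}"
  have m3: "(\<lambda>z. w (z k)) \<in> borel_measurable (PQ {1..N})" using k by (intro comp_meas[of k "{1..N}" w]) auto
  have m4: "(\<lambda>z. f (z k)) \<in> borel_measurable (PQ {1..N})" using k by (intro comp_meas[of k "{1..N}" f]) auto
  show ?thesis unfolding Hk_def[abs_def]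
    by (intro borel_measurable_times borel_measurable_diff m3 m4 Gz_meas)
qed

lemma Hk_int: "k \<in> {1..N} \<Longrightarrow> integrable (PQ {1..N}) (Hk N k)"
proof (rule Bochner_Integration.integrable_bound[OF integrable_mult_right[OF Lz_int[of "{1..N}" "{1..N}"]] Hk_meas])
  assume k: "k \<in> {1..N}"
  show "AE z in PQ {1..N}. norm (Hk N k z) \<le> norm (2 * Lz {1..N} z)"
  proof (intro AE_I2)
    fix z assume z: "z \<in> space (PQ {1..N})"
    have nn: "\<forall>i\<in>{1..N}. w (z i) \<ge> 0" using wz_nn[OF z subset_refl] .
    have "\<bar>Hk N k z\<bar> \<le> 2 * Lz {1..N} z"
      using H_bound[OF _ k nn, of "\<lambda>i. f (z i)"] unfolding Hk_def Gz_def Lz_def by (simp add: atLeastAtMost_iff)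
    moreover have "Lz {1..N} z \<ge> 0" unfolding Lz_def using nn by (intro sum_nonneg) auto
    ultimately show "norm (Hk N k z) \<le> norm (2 * Lz {1..N} z)" by simp
  qed
qed auto

lemma swap_bij: fixes k N :: nat shows "k \<in> {1..N} \<Longrightarrow> bij_betw (\<lambda>n. if n = 1 then k else if n = k then 1 else n) {1..N} {1..N}"
  by (rule bij_betwI[where g="\<lambda>n. if n = 1 then k else if n = k then 1 else n"]) auto

lemma Gz_perm:
  assumes "bij_betw t {1..N} {1..N}"
  shows "Gz N (\<lambda>n\<in>{1..N}. \<omega> (t n)) = Gz N \<omega>"
proof -
  have "(\<Sum>j = 1..N. w ((\<lambda>n\<in>{1..N}. \<omega> (t n)) j)) = (\<Sum>j = 1..N. w (\<omega> (t j)))" by simp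
  also have "\<dots> = (\<Sum>j = 1..N. w (\<omega> j))" by (rule sum.reindex_bij_betw[OF assms])
  finally have W: "(\<Sum>j = 1..N. w ((\<lambda>n\<in>{1..N}. \<omega> (t n)) j)) = (\<Sum>j = 1..N. w (\<omega> j))" .
  have "Gz N (\<lambda>n\<in>{1..N}. \<omega> (t n)) = (\<Sum>i = 1..N. w (\<omega> (t i)) / (\<Sum>j = 1..N. w (\<omega> j)) * f (\<omega> (t i)))"
    unfolding Gz_def W by simp
  also have "\<dots> = Gz N \<omega>" unfolding Gz_def
    by (rule sum.reindex_bij_betw[OF assms, of "\<lambda>i. w (\<omega> i) / (\<Sum>j = 1..N. w (\<omega> j)) * f (\<omega> i)"])
  finally show ?thesis .
qed

lemma Hk_swap:
  assumes k: "k \<in> {1..N}"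
  shows "(\<integral>z. Hk N k z \<partial>PQ {1..N}) = (\<integral>z. Hk N 1 z \<partial>PQ {1..N})"
proof -
  define t where "t n = (if n = 1 then k else if n = k then 1 else n)" for n :: nat
  have bt: "bij_betw t {1..N} {1..N}" unfolding t_def using swap_bij[OF k] by simp
  have inj: "inj_on t {1..N}" using bt by (rule bij_betw_imp_inj_on)
  have tI: "t \<in> {1..N} \<rightarrow> {1..N}" using bij_betwE[OF bt] by auto
  have N1: "1 \<in> {1..N}" using k by simp
  have "(\<integral>\<omega>. Hk N 1 (\<lambda>n\<in>{1..N}. \<omega> (t n)) \<partial>PQ {1..N}) = (\<integral>z. Hk N 1 z \<partial>PQ {1..N})"
    by (rule reindex_integral[OF inj tI Hk_meas[OF N1]])
  moreover have "Hk N 1 (\<lambda>n\<in>{1..N}. \<omega> (t n)) = Hk N k \<omega>" for \<omega>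
    unfolding Hk_def Gz_perm[OF bt] using N1 by (simp add: t_def)
  ultimately show ?thesis by simp
qed

lemma T_H: "N \<ge> 1 \<Longrightarrow> T N = real N * (\<integral>z. Hk N 1 z \<partial>PQ {1..N})"
proof -
  assume N: "N \<ge> 1"
  have "T N = (\<integral>z. (\<Sum>k\<in>{1..N}. Hk N k z) \<partial>PQ {1..N})"
    unfolding T_def Vz_def Hk_def Gz_def using H_sum[symmetric] by (simp add: atLeastAtMost_iff)
  also have "\<dots> = (\<Sum>k\<in>{1..N}. (\<integral>z. Hk N k z \<partial>PQ {1..N}))"
    by (intro Bochner_Integration.integral_sum Hk_int) auto
  also have "\<dots> = (\<Sum>k\<in>{1..N}. (\<integral>z. Hk N 1 z \<partial>PQ {1..N}))"
    by (intro sum.cong refl Hk_swap) auto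
  finally show ?thesis by simp
qed

end

context mtt begin

lemma upd_meas:
  fixes J :: "nat set"
  assumes "x \<in> space M"
  shows "(\<lambda>z. z(1 := x)) \<in> measurable (PQ J) (PQ (J \<union> {1}))"
  by (rule measurable_fun_upd[where J=J]) (use assms in auto)

lemma upd_meas2:
  fixes J :: "nat set" and X :: "'b measure"
  assumes "g \<in> measurable X M"
  shows "(\<lambda>(x, z). z(1 := g x)) \<in> measurable (X \<Otimes>\<^sub>M PQ J) (PQ (J \<union> {1}))"
proof -
  have "(\<lambda>y. (snd y)(1 := g (fst y))) \<in> measurable (X \<Otimes>\<^sub>M PQ J) (PQ (J \<union> {1}))"
    by (rule measurable_fun_upd[where J=J]) (use assms in auto)
  moreover have "(\<lambda>(x, z). z(1 := g x)) = (\<lambda>y. (snd y)(1 := g (fst y)))" by auto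
  ultimately show ?thesis by simp
qed

lemma fubini1:
  fixes g :: "(nat \<Rightarrow> 'a) \<Rightarrow> real"
  assumes N: "N \<ge> 2" and gi: "integrable (PQ {1..N}) g"
  shows "integrable Q (\<lambda>x. \<integral>z. g (z(1 := x)) \<partial>PQ {2..N})"
    and "integral\<^sup>L (PQ {1..N}) g = (\<integral>x. (\<integral>z. g (z(1 := x)) \<partial>PQ {2..N}) \<partial>Q)"
proof -
  define J where "J = {2..N}"
  have Jun: "J \<union> {1} = {1..N}" using N unfolding J_def by auto
  have ins: "insert 1 J = {1..N}" using N unfolding J_def by auto
  interpret PS: pair_sigma_finite Q "PQ J"
    by (simp add: pair_sigma_finite_def sfQ prob_space_imp_sigma_finite[OF prob_PQ])
  have m: "(\<lambda>(x, X). X(1 := x)) \<in> measurable (Q \<Otimes>\<^sub>M PQ J) (PQ {1..N})"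
  proof -
    have "(\<lambda>x. x) \<in> measurable Q M" by simp
    from upd_meas2[OF this, of J] show ?thesis unfolding Jun .
  qed
  have d: "distr (Q \<Otimes>\<^sub>M PQ J) (PQ {1..N}) (\<lambda>(x, X). X(1 := x)) = PQ {1..N}"
    using distr_pair_PiM_eq_PiM[of J "\<lambda>_. Q" 1] prob_Q ins by simp
  have gm: "g \<in> borel_measurable (PQ {1..N})" using gi by simp
  define F where "F = (\<lambda>(x, X). g (X(1 := x)))"
  have F: "F = (\<lambda>y. g ((\<lambda>(x, X). X(1 := x)) y))" unfolding F_def by auto
  have i2: "integrable (Q \<Otimes>\<^sub>M PQ J) F"
    using integrable_distr_eq[OF m gm] d gi unfolding F by simp
  show "integrable Q (\<lambda>x. \<integral>z. g (z(1 := x)) \<partial>PQ {2..N})"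
    using PS.integrable_fst'[OF i2] unfolding F_def J_def by simp
  have "integral\<^sup>L (PQ {1..N}) g = integral\<^sup>L (distr (Q \<Otimes>\<^sub>M PQ J) (PQ {1..N}) (\<lambda>(x, X). X(1 := x))) g"
    using d by simp
  also have "\<dots> = integral\<^sup>L (Q \<Otimes>\<^sub>M PQ J) F" unfolding F by (rule integral_distr[OF m gm])
  also have "\<dots> = (\<integral>x. (\<integral>z. F (x, z) \<partial>PQ J) \<partial>Q)" by (rule PS.integral_fst'[OF i2, symmetric])
  finally show "integral\<^sup>L (PQ {1..N}) g = (\<integral>x. (\<integral>z. g (z(1 := x)) \<partial>PQ {2..N}) \<partial>Q)"
    unfolding F_def J_def by simp
qed

lemma PN_meas: "N \<ge> 2 \<Longrightarrow> PN M p q N f \<in> borel_measurable M"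
proof -
  assume N: "N \<ge> 2"
  define J where "J = {2..N}"
  have Jun: "J \<union> {1} = {1..N}" using N unfolding J_def by auto
  interpret PJ: prob_space "PQ J" by (rule prob_PQ)
  have m: "(\<lambda>(x, z). z(1 := x)) \<in> measurable (M \<Otimes>\<^sub>M PQ J) (PQ {1..N})"
  proof -
    have "(\<lambda>x. x) \<in> measurable M M" by simp
    from upd_meas2[OF this, of J] show ?thesis unfolding Jun .
  qed
  have "(\<lambda>y. Gz N ((\<lambda>(x, z). z(1 := x)) y)) \<in> borel_measurable (M \<Otimes>\<^sub>M PQ J)"
    by (rule measurable_compose[OF m Gz_meas])
  then have "case_prod (\<lambda>x z. Gz N (z(1 := x))) \<in> borel_measurable (M \<Otimes>\<^sub>M PQ J)"
    by (simp add: case_prod_beta')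
  then have "(\<lambda>x. \<integral>z. Gz N (z(1 := x)) \<partial>PQ J) \<in> borel_measurable M"
    by (rule PJ.borel_measurable_lebesgue_integral)
  moreover have "PN M p q N f = (\<lambda>x. \<integral>z. Gz N (z(1 := x)) \<partial>PQ J)"
    using PN_eq[OF N] unfolding J_def by auto
  ultimately show ?thesis by simp
qed

lemma pointwise_H:
  assumes N: "N \<ge> 2" and x: "x \<in> space M"
  shows "w x * (f x * (f x - PN M p q N f x)) = (\<integral>z. Hk N 1 (z(1 := x)) \<partial>PQ {2..N})"
proof -
  define J where "J = {2..N}"
  interpret PJ: prob_space "PQ J" by (rule prob_PQ)
  have H1: "Hk N 1 (z(1 := x)) = w x * (f x * (f x - Gz N (z(1 := x))))" for z
    unfolding Hk_def by simp
  show ?thesis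
  proof (cases "w x = 0")
    case True
    then show ?thesis unfolding H1 by simp
  next
    case False
    then have wx: "w x > 0" using w_nn[OF x] by simp
    have Jun: "J \<union> {1} = {1..N}" using N unfolding J_def by auto
    have gm: "(\<lambda>z. Gz N (z(1 := x))) \<in> borel_measurable (PQ J)"
      using measurable_compose[OF upd_meas[OF x, of J, unfolded Jun] Gz_meas[of N]] by simp
    define B where "B z = (w x * \<bar>f x\<bar> + (\<Sum>i\<in>J. w (z i) * \<bar>f (z i)\<bar>)) / w x" for z
    have Bi: "integrable (PQ J) B"
    proof -
      have "integrable (PQ J) (\<lambda>z. \<Sum>i\<in>J. w (z i) * \<bar>f (z i)\<bar>)"
        by (intro Bochner_Integration.integrable_sum comp_int[of _ J "\<lambda>x. w x * \<bar>f x\<bar>", simplified] int_wabsf)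
      then show ?thesis unfolding B_def[abs_def]
        by (intro integrable_divide Bochner_Integration.integrable_add) auto
    qed
    have bound: "\<bar>Gz N (z(1 := x))\<bar> \<le> B z" if z: "z \<in> space (PQ J)" for z
    proof -
      define a where "a i = w ((z(1 := x)) i)" for i
      define b where "b i = f ((z(1 := x)) i)" for i
      have zs: "(z(1 := x)) i \<in> space M" if "i \<in> {1..N}" for i
        using that x space_PQ_comp[OF z, of i] unfolding J_def by (cases "i = 1") auto
      have nn: "\<forall>i\<in>{1..N}. a i \<ge> 0" unfolding a_def using zs w_nn by auto
      have a1: "a 1 = w x" unfolding a_def by simp
      have N1: "1 \<in> {1..N}" using N by simp
      have Wge: "(\<Sum>j\<in>{1..N}. a j) \<ge> w x"
        using member_le_sum[of 1 "{1..N}" a] nn N1 a1 by auto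
      have Wp: "(\<Sum>j\<in>{1..N}. a j) > 0" using Wge wx by simp
      have "\<bar>Gz N (z(1 := x))\<bar> = \<bar>\<Sum>i\<in>{1..N}. a i / (\<Sum>j\<in>{1..N}. a j) * b i\<bar>"
        unfolding Gz_def a_def b_def by simp
      also have "\<dots> \<le> (\<Sum>i\<in>{1..N}. \<bar>a i / (\<Sum>j\<in>{1..N}. a j) * b i\<bar>)" by (rule sum_abs)
      also have "\<dots> \<le> (\<Sum>i\<in>{1..N}. a i * \<bar>b i\<bar> / w x)"
      proof (rule sum_mono)
        fix i assume i: "i \<in> {1..N}"
        have "\<bar>a i / (\<Sum>j\<in>{1..N}. a j) * b i\<bar> = a i * \<bar>b i\<bar> / (\<Sum>j\<in>{1..N}. a j)"
          using nn i Wp by (simp add: abs_mult)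
        also have "\<dots> \<le> a i * \<bar>b i\<bar> / w x"
          using nn i Wge wx by (intro divide_left_mono) auto
        finally show "\<bar>a i / (\<Sum>j\<in>{1..N}. a j) * b i\<bar> \<le> a i * \<bar>b i\<bar> / w x" .
      qed
      also have "\<dots> = (\<Sum>i\<in>{1..N}. a i * \<bar>b i\<bar>) / w x" by (simp add: sum_divide_distrib)
      also have "(\<Sum>i\<in>{1..N}. a i * \<bar>b i\<bar>) = a 1 * \<bar>b 1\<bar> + (\<Sum>i\<in>J. a i * \<bar>b i\<bar>)"
        unfolding J_def using N by (simp add: sum.atLeast_Suc_atMost numeral_2_eq_2)
      also have "(\<Sum>i\<in>J. a i * \<bar>b i\<bar>) = (\<Sum>i\<in>J. w (z i) * \<bar>f (z i)\<bar>)"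
        unfolding J_def a_def b_def by (intro sum.cong) auto
      moreover have b1: "b 1 = f x" by (simp add: b_def)
      ultimately show ?thesis unfolding B_def by (simp only: a1 b1)
    qed
    have ae: "AE z in PQ J. norm (Gz N (z(1 := x))) \<le> norm (B z)"
    proof (rule AE_I2)
      fix z assume z: "z \<in> space (PQ J)"
      show "norm (Gz N (z(1 := x))) \<le> norm (B z)"
        using bound[OF z] abs_ge_self[of "B z"] by simp
    qed
    have gi: "integrable (PQ J) (\<lambda>z. Gz N (z(1 := x)))"
      by (rule Bochner_Integration.integrable_bound[OF Bi gm ae])
    have "(\<integral>z. Hk N 1 (z(1 := x)) \<partial>PQ J) = w x * (f x * (\<integral>z. f x - Gz N (z(1 := x)) \<partial>PQ J))"
      unfolding H1 by simp
    also have "(\<integral>z. f x - Gz N (z(1 := x)) \<partial>PQ J) = f x - (\<integral>z. Gz N (z(1 := x)) \<partial>PQ J)"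
      using gi by (simp add: Bochner_Integration.integral_diff PJ.prob_space)
    finally have calc: "(\<integral>z. Hk N 1 (z(1 := x)) \<partial>PQ J) = w x * (f x * (f x - (\<integral>z. Gz N (z(1 := x)) \<partial>PQ J)))" .
    have e1: "PN M p q N f x = (\<integral>z. Gz N (z(1 := x)) \<partial>PQ J)" using PN_eq[OF N] unfolding J_def by simp
    show ?thesis using calc e1 unfolding J_def by (simp only:)
  qed
qed

lemma Dir_N:
  assumes N: "N \<ge> 2"
  shows "integrable PP (\<lambda>x. f x * (f x - PN M p q N f x))"
    and "(\<integral>x. f x * (f x - PN M p q N f x) \<partial>PP) = T N / real N"
proof -
  have gm: "(\<lambda>x. f x * (f x - PN M p q N f x)) \<in> borel_measurable M"
    using PN_meas[OF N] by measurable
  have N1: "1 \<in> {1..N}" using N by simp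
  note fb = fubini1[OF N Hk_int[OF N1]]
  have eq: "\<And>x. x \<in> space Q \<Longrightarrow> w x * (f x * (f x - PN M p q N f x)) = (\<integral>z. Hk N 1 (z(1 := x)) \<partial>PQ {2..N})"
    using pointwise_H[OF N] by simp
  have "integrable Q (\<lambda>x. w x * (f x * (f x - PN M p q N f x)))"
  proof -
    have "integrable Q (\<lambda>x. w x * (f x * (f x - PN M p q N f x))) \<longleftrightarrow> integrable Q (\<lambda>x. \<integral>z. Hk N 1 (z(1 := x)) \<partial>PQ {2..N})"
      by (rule Bochner_Integration.integrable_cong) (auto simp: eq)
    then show ?thesis using fb(1) by simp
  qed
  then show "integrable PP (\<lambda>x. f x * (f x - PN M p q N f x))"
    using integrable_PP[OF gm] by simp
  have "(\<integral>x. f x * (f x - PN M p q N f x) \<partial>PP) = (\<integral>x. w x * (f x * (f x - PN M p q N f x)) \<partial>Q)"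
    by (rule integral_PP[OF gm])
  also have "\<dots> = (\<integral>x. (\<integral>z. Hk N 1 (z(1 := x)) \<partial>PQ {2..N}) \<partial>Q)"
    by (rule Bochner_Integration.integral_cong[OF refl eq])
  also have "\<dots> = (\<integral>z. Hk N 1 z \<partial>PQ {1..N})" by (rule fb(2)[symmetric])
  also have "\<dots> = T N / real N" using T_H[of N] N by simp
  finally show "(\<integral>x. f x * (f x - PN M p q N f x) \<partial>PP) = T N / real N" .
qed

end

lemma frac3:
  fixes a b c x y z :: real
  assumes "a > 0" "b > 0" "c > 0" "b * a * z + c * b * x \<le> 2 * a * (c * y)"
  shows "z / c + x / a \<le> 2 * (y / b)"
proof -
  have "z / c + x / a - 2 * (y / b) = (b * a * z + c * b * x - 2 * a * (c * y)) / (a * b * c)"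
    using assms(1-3) by (simp add: field_simps)
  also have "\<dots> \<le> 0" using assms by (intro divide_nonpos_pos) auto
  finally show ?thesis by simp
qed

context mtt begin

definition DD :: "nat \<Rightarrow> real" where "DD n = T n / real n"

lemma Vs_single: "Vs a b {k} = 0"
  by (cases "a k = 0") (simp_all add: Vs_def power2_eq_square)

lemma T1: "T 1 = 0"
  unfolding T_def Vz_def by (simp add: Vs_single)

lemma DD1: "DD 1 = 0" unfolding DD_def using T1 by simp

lemma DD_strict: "n \<ge> 1 \<Longrightarrow> DD n < DD (Suc n)"
proof -
  assume n: "n \<ge> 1"
  have "real (n+1) * T n < real n * T (n+1)" by (rule T_strict[OF n])
  then have "T n / real n < T (n+1) / real (n+1)"
    using n by (simp add: field_simps)
  then show ?thesis unfolding DD_def by simp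
qed

lemma DD_conc: "n \<ge> 1 \<Longrightarrow> DD (n + 2) - DD (n + 1) \<le> DD (n + 1) - DD n"
proof -
  assume n: "n \<ge> 1"
  have h: "real (n+1) * real n * T (n+2) + real (n+2) * real (n+1) * T n \<le> 2 * real n * (real (n+2) * T (n+1))"
    by (rule T_conc[OF n])
  have pos: "real n * real (n+1) * real (n+2) > 0" using n by simp
  have "T (n+2) / real (n+2) + T n / real n \<le> 2 * (T (n+1) / real (n+1))"
    using frac3[of "real n" "real (n+1)" "real (n+2)" "T (n+2)" "T n" "T (n+1)"] h n by simp
  then show ?thesis unfolding DD_def by linarith
qed

lemma dseq_DD: "dseq DD"
proof
  show "DD 1 = 0" by (rule DD1)
  fix n :: nat assume n: "1 \<le> n"
  show "DD n < DD (Suc n)" by (rule DD_strict[OF n])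
  show "DD (n + 2) - DD (n + 1) \<le> DD (n + 1) - DD n" by (rule DD_conc[OF n])
qed

lemma DirInt:
  assumes n: "n \<ge> 1"
  shows "integrable PP (\<lambda>x. f x * (f x - PN M p q n f x))"
    and "(\<integral>x. f x * (f x - PN M p q n f x) \<partial>PP) = DD n"
proof -
  have "(integrable PP (\<lambda>x. f x * (f x - PN M p q n f x))) \<and> (\<integral>x. f x * (f x - PN M p q n f x) \<partial>PP) = DD n"
  proof (cases "n = 1")
    case True
    have "PN M p q n f = f" using True by (simp add: PN_def fun_eq_iff)
    then show ?thesis using DD1 True by simp
  next
    case False
    then have n2: "n \<ge> 2" using n by simp
    then show ?thesis using Dir_N[OF n2] by (simp add: DD_def)
  qed
  then show "integrable PP (\<lambda>x. f x * (f x - PN M p q n f x))"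
    and "(\<integral>x. f x * (f x - PN M p q n f x) \<partial>PP) = DD n" by auto
qed

lemma Dir_interp:
  assumes lam: "lam \<ge> 1"
  shows "Dir M p q lam f = interp DD lam"
proof -
  define n where "n = nat \<lfloor>lam\<rfloor>"
  define \<beta> where "\<beta> = real n + 1 - lam"
  have n1: "n \<ge> 1" unfolding n_def using lam by (subst le_nat_iff) (auto simp: le_floor_iff)
  have Pl: "Plam M p q lam f x = \<beta> * PN M p q n f x + (1 - \<beta>) * PN M p q (n + 1) f x" for x
    unfolding Plam_def n_def \<beta>_def Let_def by simp
  have pw: "f x * (f x - Plam M p q lam f x) = \<beta> * (f x * (f x - PN M p q n f x)) + (1 - \<beta>) * (f x * (f x - PN M p q (n+1) f x))" for x
    unfolding Pl by (simp add: algebra_simps)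
  note i1 = DirInt[OF n1] and i2 = DirInt[of "n+1"]
  have "Dir M p q lam f = (\<integral>x. \<beta> * (f x * (f x - PN M p q n f x)) + (1 - \<beta>) * (f x * (f x - PN M p q (n+1) f x)) \<partial>PP)"
    unfolding Dir_def pw by simp
  also have "\<dots> = \<beta> * DD n + (1 - \<beta>) * DD (n + 1)"
    using i1 i2 n1 by (simp add: Bochner_Integration.integral_add)
  also have "\<dots> = interp DD lam"
    unfolding interp_def n_def[symmetric] \<beta>_def by (simp add: algebra_simps)
  finally show ?thesis .
qed

end

lemma concave_on_cong_real:
  fixes F G :: "real \<Rightarrow> real"
  assumes "concave_on {1..} F" "\<And>x. x \<ge> 1 \<Longrightarrow> F x = G x"
  shows "concave_on {1..} G"
proof -
  have c: "u * x + v * y \<ge> 1" if "x \<ge> 1" "y \<ge> 1" "u \<ge> 0" "v \<ge> 0" "u + v = 1" for x y u v :: real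
  proof -
    have "u * x + v * y \<ge> u * 1 + v * 1" using that by (intro add_mono mult_left_mono) auto
    then show ?thesis using that by simp
  qed
  show ?thesis using assms(1) unfolding concave_on_iff using assms(2) c by auto
qed

theorem proposition7p3:
  fixes M :: "'a measure" and p q f :: "'a \<Rightarrow> real"
  assumes "sigma_finite_measure M"
    and "p \<in> borel_measurable M" and "\<And>x. x \<in> space M \<Longrightarrow> p x \<ge> 0"
    and "(\<integral>\<^sup>+ x. ennreal (p x) \<partial>M) = 1"
    and "q \<in> borel_measurable M" and "\<And>x. x \<in> space M \<Longrightarrow> q x \<ge> 0"
    and "(\<integral>\<^sup>+ x. ennreal (q x) \<partial>M) = 1"
    and "\<And>x. x \<in> space M \<Longrightarrow> p x > 0 \<Longrightarrow> q x > 0"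
    and "f \<in> borel_measurable M"
    and "integrable (density M p) (\<lambda>x. (f x)\<^sup>2)"
    and "(\<integral>x. f x \<partial>(density M p)) = 0"
    and "(\<integral>x. (f x)\<^sup>2 \<partial>(density M p)) > 0"
  shows "(\<forall>lam\<ge>1. Dir M p q lam f \<ge> 0)
     \<and> continuous_on {1..} (\<lambda>lam. Dir M p q lam f)
     \<and> concave_on {1..} (\<lambda>lam. Dir M p q lam f)
     \<and> strict_mono_on {1..} (\<lambda>lam. Dir M p q lam f)"
proof -
  interpret mtt M p q f by (rule mtt.intro[OF assms])
  interpret dseq DD by (rule dseq_DD)
  have eq: "\<And>lam. lam \<ge> 1 \<Longrightarrow> Dir M p q lam f = interp DD lam" by (rule Dir_interp)
  show ?thesis
  proof (intro conjI)
    show "\<forall>lam\<ge>1. Dir M p q lam f \<ge> 0" using eq interp_nonneg by simp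
    show "continuous_on {1..} (\<lambda>lam. Dir M p q lam f)"
      by (rule continuous_on_eq[OF interp_cont]) (simp add: eq)
    show "concave_on {1..} (\<lambda>lam. Dir M p q lam f)"
      by (rule concave_on_cong_real[OF interp_concave]) (simp add: eq)
    show "strict_mono_on {1..} (\<lambda>lam. Dir M p q lam f)"
      using interp_smono unfolding strict_mono_on_def by (simp add: eq)
  qed
qed

end
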